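(* Consider $\min_{x\in X}f(x)$, $f(x)=\mathbb{E}[F(x,\xi)]$, with $F:\mathcal{D}\times\Omega\to\mathbb{R}$, $\mathcal{D}\subseteq\mathbb{R}^n$ open, $X\subset\mathcal{D}$ nonempty closed convex, $F(\cdot,\xi)$ convex on $\mathcal{D}$ for all $\xi$, $\mathbb{E}[F(x,\xi)]$ finite on $\mathcal{D}$. Let $f$ be differentiable over $X$ with $L$-Lipschitz gradient and strongly convex with constant $\eta>0$, where $L>\eta$; let $X$ be compact, $D=\max_{x,y\in X}\|x-y\|$, and assume $\mathbb{E}[\|w_k\|^2\mid\mathcal{F}_k]\le\nu^2$ a.s. for all $k$. Let $\{x_k\}$ be generated by the iteration with the cascading steplength scheme with $\gamma_0\in(0,\frac2L)$ and $\theta\in(0,1)$. Then $\{x_k\}$ converges almost surely to the unique optimal solution.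
   Context: Iteration: $x_{k+1}=\Pi_X(x_k-\gamma_k(\nabla f(x_k)+w_k))$, $w_k=\nabla_xF(x_k,\xi_k)-\nabla f(x_k)$, $x_0\in X$ random, $\mathcal{F}_k=\{x_0,\xi_0,\dots,\xi_{k-1}\}$, $\mathbb{E}[w_k\mid\mathcal{F}_k]=0$. Cascading steplength scheme: $q(\gamma)=1-\eta\gamma(2-L\gamma)$; $\gamma_t=\theta^t\gamma_0$, $q_t=q(\gamma_t)$; $K_0=\max\{k\in\mathbb{Z}_+: q_0^kD^2>\frac{\gamma_0^2\nu^2}{1-q_0}\}$ (where $\gamma_0$ is chosen so that $D^2>\frac{\gamma_0^2\nu^2}{1-q_0}$), and for $t\ge1$, $K_t=\max\{k\in\mathbb{Z}_+: q_t^k\,2^t\big(\prod_{j=0}^{t-1}q_j^{K_j}\big)D^2>\frac{\gamma_t^2\nu^2}{1-q_t}\}$; with $\bar K_{-1}=0$, $\bar K_t=\sum_{j=0}^tK_j$, the stepsize is $\gamma_k=\gamma_t$ for $k=\bar K_{t-1}+1,\dots,\bar K_t$. *)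

theory Defs
  imports "HOL-Probability.Probability"
begin

definition strongly_convex_on :: "'a::real_normed_vector set \<Rightarrow> real \<Rightarrow> ('a \<Rightarrow> real) \<Rightarrow> bool" where
  "strongly_convex_on S eta f \<longleftrightarrow>
     (\<forall>x\<in>S. \<forall>y\<in>S. \<forall>t::real. 0 \<le> t \<and> t \<le> 1 \<longrightarrow>
        f ((1 - t) *\<^sub>R x + t *\<^sub>R y) \<le> (1 - t) * f x + t * f y - eta / 2 * t * (1 - t) * (norm (x - y))\<^sup>2)"

definition nat_filtration :: "'a measure \<Rightarrow> 'b measure \<Rightarrow> ('a \<Rightarrow> 'v::topological_space) \<Rightarrow> (nat \<Rightarrow> 'a \<Rightarrow> 'b) \<Rightarrow> nat \<Rightarrow> 'a measure" where
  "nat_filtration M N x0 xi k =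
     sigma (space M)
       ({x0 -` A \<inter> space M | A. A \<in> sets borel} \<union>
        {xi j -` B \<inter> space M | j B. j < k \<and> B \<in> sets N})"

definition qfun :: "real \<Rightarrow> real \<Rightarrow> real \<Rightarrow> real" where
  "qfun eta L g = 1 - eta * g * (2 - L * g)"

text \<open>K_t given gamma_t, the product P = prod_{j<t} q_j^{K_j} (empty product 1 for t = 0)
  and t:  max { k. q_t^k 2^t P D^2 > gamma_t^2 nu^2 / (1 - q_t) }.\<close>
definition cascK_of :: "real \<Rightarrow> real \<Rightarrow> real \<Rightarrow> real \<Rightarrow> real \<Rightarrow> real \<Rightarrow> nat \<Rightarrow> nat" where
  "cascK_of eta L nu D g P t =
     Max {k::nat. (qfun eta L g) ^ k * 2 ^ t * P * D\<^sup>2 > g\<^sup>2 * nu\<^sup>2 / (1 - qfun eta L g)}"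

fun casc_P :: "real \<Rightarrow> real \<Rightarrow> real \<Rightarrow> real \<Rightarrow> real \<Rightarrow> real \<Rightarrow> nat \<Rightarrow> real" where
  "casc_P eta L g0 theta nu D 0 = 1"
| "casc_P eta L g0 theta nu D (Suc t) =
     casc_P eta L g0 theta nu D t *
     (qfun eta L (theta ^ t * g0)) ^ cascK_of eta L nu D (theta ^ t * g0) (casc_P eta L g0 theta nu D t) t"

definition casc_K :: "real \<Rightarrow> real \<Rightarrow> real \<Rightarrow> real \<Rightarrow> real \<Rightarrow> real \<Rightarrow> nat \<Rightarrow> nat" where
  "casc_K eta L g0 theta nu D t = cascK_of eta L nu D (theta ^ t * g0) (casc_P eta L g0 theta nu D t) t"

definition casc_Kbar :: "real \<Rightarrow> real \<Rightarrow> real \<Rightarrow> real \<Rightarrow> real \<Rightarrow> real \<Rightarrow> nat \<Rightarrow> nat" where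
  "casc_Kbar eta L g0 theta nu D t = (\<Sum>j\<le>t. casc_K eta L g0 theta nu D j)"

text \<open>Stepsize gamma_k = gamma_t for Kbar_(t-1) < k \<le> Kbar_t (Kbar_(-1) = 0); k = 0 uses gamma_0.
  Equivalently, t is the least stage index with k \<le> Kbar_t.\<close>
definition casc_step :: "real \<Rightarrow> real \<Rightarrow> real \<Rightarrow> real \<Rightarrow> real \<Rightarrow> real \<Rightarrow> nat \<Rightarrow> real" where
  "casc_step eta L g0 theta nu D k =
     theta ^ (LEAST t. k \<le> casc_Kbar eta L g0 theta nu D t) * g0"

end

theory Submission
  imports Defs
begin


declare casc_P.simps(2)[simp del]

locale casc =
  fixes eta L g0 th nu D :: real
  assumes eta: "0 < eta" and Leta: "eta < L" and g0: "0 < g0" "g0 < 2 / L"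
    and th: "0 < th" "th < 1" and nu: "0 < nu"
    and D0: "D\<^sup>2 > g0\<^sup>2 * nu\<^sup>2 / (1 - qfun eta L g0)"
begin

definition gam :: "nat \<Rightarrow> real" where "gam t = th ^ t * g0"
definition cc :: "real \<Rightarrow> real" where "cc g = g\<^sup>2 * nu\<^sup>2 / (1 - qfun eta L g)"
abbreviation q :: "real \<Rightarrow> real" where "q g \<equiv> qfun eta L g"
abbreviation P :: "nat \<Rightarrow> real" where "P t \<equiv> casc_P eta L g0 th nu D t"
abbreviation K :: "nat \<Rightarrow> nat" where "K t \<equiv> casc_K eta L g0 th nu D t"
definition A :: "nat \<Rightarrow> real" where "A t = 2 ^ t * P t * D\<^sup>2"

lemma L0: "L > 0" using eta Leta by simp

lemma gL: "g * (2 - L * g) \<le> 1 / L"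
proof -
  have "0 \<le> (L * g - 1)\<^sup>2" by simp
  hence "L * (g * (2 - L * g)) \<le> 1" by (simp add: power2_eq_square algebra_simps)
  thus ?thesis using L0 by (simp add: field_simps mult.commute)
qed

lemma q_props:
  assumes "0 < g" "g \<le> g0"
  shows "0 < q g" "q g < 1" "1 - q g = eta * g * (2 - L * g)"
    "q g \<ge> 1 - 2 * eta * g" "1 - q g \<ge> eta * g * (2 - L * g0)" "q g \<ge> 1 - eta / L"
proof -
  have Lg: "L * g < 2" using assms g0 L0 by (smt (verit) mult_le_cancel_left_pos pos_less_divide_eq mult.commute)
  have Lg0: "L * g0 < 2" using g0 L0 by (simp add: pos_less_divide_eq mult.commute)
  have "eta * (g * (2 - L * g)) \<le> eta * (1 / L)" using mult_left_mono[OF gL[of g], of eta] eta by simp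
  also have "\<dots> < 1" using eta Leta by simp
  finally have a: "eta * (g * (2 - L * g)) < 1" .
  show "1 - q g = eta * g * (2 - L * g)" by (simp add: qfun_def)
  show "0 < q g" using a by (simp add: qfun_def mult.assoc)
  have "0 < eta * g * (2 - L * g)" using eta assms Lg by simp
  thus "q g < 1" by (simp add: qfun_def)
  have "eta * g * (2 - L * g) \<le> eta * g * 2" using eta assms L0 by (simp add: mult_left_mono)
  thus "q g \<ge> 1 - 2 * eta * g" by (simp add: qfun_def)
  have "L * g \<le> L * g0" using assms L0 by simp
  hence "eta * g * (2 - L * g0) \<le> eta * g * (2 - L * g)" using eta assms by (intro mult_left_mono) auto
  thus "1 - q g \<ge> eta * g * (2 - L * g0)" by (simp add: qfun_def)
  show "q g \<ge> 1 - eta / L" using \<open>eta * (g * (2 - L * g)) \<le> eta * (1 / L)\<close> by (simp add: qfun_def mult.assoc)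
qed

lemma cc_eq: assumes "0 < g" "g \<le> g0" shows "cc g = g * nu\<^sup>2 / (eta * (2 - L * g))"
proof -
  have "cc g = (g * (g * nu\<^sup>2)) / (g * (eta * (2 - L * g)))"
    unfolding cc_def q_props(3)[OF assms] by (simp add: power2_eq_square mult.assoc mult.left_commute)
  also have "\<dots> = g * nu\<^sup>2 / (eta * (2 - L * g))" using assms by (rule_tac mult_divide_mult_cancel_left) simp
  finally show ?thesis .
qed

lemma cc_pos: assumes "0 < g" "g \<le> g0" shows "cc g > 0"
  using q_props[OF assms] assms nu by (simp add: cc_def)

lemma gam_pos: "gam t > 0" using th g0 by (simp add: gam_def)
lemma gam_le: "gam t \<le> g0" using th g0 by (simp add: gam_def mult_left_le_one_le power_le_one)
lemma gam_Suc: "gam (Suc t) = th * gam t" by (simp add: gam_def)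

lemma Lgam: "L * gam t < 2"
  using gam_le[of t] g0 L0 by (smt (verit) mult_le_cancel_left_pos pos_less_divide_eq mult.commute)

lemma ratio_aux: "a \<noteq> 0 \<Longrightarrow> b \<noteq> 0 \<Longrightarrow> e \<noteq> 0 \<Longrightarrow> th' * g * n / (e * b) = g * n / (e * a) * (th' * a / b)"
  for a b e g n th' :: real by (simp add: field_simps)

lemma cc_ratio: "cc (gam (Suc t)) = cc (gam t) * (th * (2 - L * gam t) / (2 - L * gam (Suc t)))"
proof -
  have a: "2 - L * gam t \<noteq> 0" "2 - L * (th * gam t) \<noteq> 0" using Lgam[of t] Lgam[of "Suc t"] by (auto simp: gam_Suc)
  show ?thesis
    unfolding cc_eq[OF gam_pos gam_le] unfolding gam_Suc using a eta
    by (intro ratio_aux) auto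
qed

lemma cc_mono: "cc (gam (Suc t)) \<le> cc (gam t)"
proof -
  have a: "2 - L * gam t > 0" "2 - L * gam (Suc t) > 0" using Lgam[of t] Lgam[of "Suc t"] by auto
  have "gam (Suc t) \<le> gam t" using gam_Suc[of t] th gam_pos[of t] by simp
  hence "2 - L * gam t \<le> 2 - L * gam (Suc t)" using L0 by simp
  hence "th * (2 - L * gam t) / (2 - L * gam (Suc t)) \<le> 1" using a th
    by (simp add: divide_le_eq_1) (smt (verit) mult_le_cancel_right1 mult.commute)
  hence "cc (gam t) * (th * (2 - L * gam t) / (2 - L * gam (Suc t))) \<le> cc (gam t) * 1"
    using cc_pos[OF gam_pos gam_le, of t] by (intro mult_left_mono) auto
  thus ?thesis unfolding cc_ratio[of t] by simp
qed

lemma cc_ratio_low: "cc (gam (Suc t)) \<ge> cc (gam t) * (th * (2 - L * g0) / 2)"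
proof -
  have a: "2 - L * gam t > 0" "2 - L * gam (Suc t) > 0" using Lgam[of t] Lgam[of "Suc t"] by auto
  have "L * gam t \<le> L * g0" using gam_le[of t] L0 by simp
  hence b: "th * (2 - L * g0) \<le> th * (2 - L * gam t)" using th by simp
  have "2 - L * gam (Suc t) \<le> 2" using L0 gam_pos[of "Suc t"] by simp
  have "th * (2 - L * g0) / 2 \<le> th * (2 - L * gam t) / 2" using b by simp
  also have "\<dots> \<le> th * (2 - L * gam t) / (2 - L * gam (Suc t))"
    using a th \<open>2 - L * gam (Suc t) \<le> 2\<close> by (intro divide_left_mono) auto
  finally have "cc (gam t) * (th * (2 - L * g0) / 2) \<le> cc (gam t) * (th * (2 - L * gam t) / (2 - L * gam (Suc t)))"
    using cc_pos[OF gam_pos gam_le, of t] by (intro mult_left_mono) auto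
  thus ?thesis unfolding cc_ratio[of t] by simp
qed

definition S :: "nat \<Rightarrow> nat set" where
  "S t = {k. (q (gam t)) ^ k * A t > cc (gam t)}"

lemma K_eq: "K t = Max (S t)"
  by (simp add: casc_K_def cascK_of_def S_def A_def cc_def gam_def mult.assoc)

lemma P_Suc: "P (Suc t) = P t * q (gam t) ^ K t"
  by (simp only: casc_P.simps casc_K_def gam_def)

lemma A_Suc: "A (Suc t) = 2 * q (gam t) ^ K t * A t"
  by (simp add: A_def P_Suc)

lemma S_finite: "finite (S t)"
proof -
  have q: "0 < q (gam t)" "q (gam t) < 1" using q_props[OF gam_pos gam_le] by auto
  have c: "cc (gam t) > 0" by (rule cc_pos[OF gam_pos gam_le])
  show ?thesis
  proof (cases "A t > 0")
    case True
    have "cc (gam t) / A t > 0" using c True by simp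
    then obtain n where n: "q (gam t) ^ n < cc (gam t) / A t" using real_arch_pow_inv[OF _ q(2)] by blast
    have "S t \<subseteq> {..<n}"
    proof
      fix k assume "k \<in> S t"
      hence k: "q (gam t) ^ k * A t > cc (gam t)" by (simp add: S_def)
      show "k \<in> {..<n}"
      proof (rule ccontr)
        assume "k \<notin> {..<n}" hence "n \<le> k" by simp
        hence "q (gam t) ^ k \<le> q (gam t) ^ n" using q by (simp add: power_decreasing)
        hence "q (gam t) ^ k * A t \<le> q (gam t) ^ n * A t" using True by simp
        also have "\<dots> < cc (gam t)" using n True by (simp add: pos_less_divide_eq)
        finally show False using k by simp
      qed
    qed
    thus ?thesis using finite_subset by blast
  next
    case False
    hence "S t = {}" using q c unfolding S_def
      by (auto simp: mult_nonneg_nonpos order.strict_iff_not) (smt (verit) mult_nonneg_nonpos zero_le_power)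
    thus ?thesis by simp
  qed
qed

lemma invariant: "P t > 0 \<and> A t > cc (gam t)"
proof (induction t)
  case 0
  show ?case using D0 by (simp add: A_def cc_def gam_def)
next
  case (Suc t)
  have q: "0 < q (gam t)" using q_props[OF gam_pos gam_le] by auto
  have "0 \<in> S t" using Suc by (simp add: S_def)
  hence "K t \<in> S t" unfolding K_eq using S_finite by (intro Max_in) auto
  hence k: "q (gam t) ^ K t * A t > cc (gam t)" by (simp add: S_def)
  have "P (Suc t) > 0" using Suc q by (simp add: P_Suc)
  moreover have "A (Suc t) > cc (gam (Suc t))"
    using k cc_mono[of t] cc_pos[OF gam_pos gam_le, of t] unfolding A_Suc by simp
  ultimately show ?case by simp
qed

lemma K_in: "q (gam t) ^ K t * A t > cc (gam t)"
proof -
  have "0 \<in> S t" using invariant[of t] by (simp add: S_def)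
  hence "K t \<in> S t" unfolding K_eq using S_finite by (intro Max_in) auto
  thus ?thesis by (simp add: S_def)
qed

lemma K_notin: "q (gam t) ^ Suc (K t) * A t \<le> cc (gam t)"
proof -
  have "Suc (K t) \<notin> S t"
  proof
    assume "Suc (K t) \<in> S t"
    hence "Suc (K t) \<le> K t" unfolding K_eq using S_finite by (intro Max_ge) auto
    thus False by simp
  qed
  thus ?thesis by (simp add: S_def not_less)
qed

lemma K_lower: "(real (K (Suc t)) + 1) * gam (Suc t) > 1 / (4 * eta)"
proof -
  let ?g = "gam (Suc t)" let ?q = "q (gam (Suc t))" let ?n = "Suc (K (Suc t))"
  have qp: "0 < ?q" "?q < 1" "?q \<ge> 1 - 2 * eta * ?g" using q_props[OF gam_pos gam_le] by auto
  have c: "cc ?g > 0" by (rule cc_pos[OF gam_pos gam_le])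
  have A1: "A (Suc t) > 2 * cc (gam t)" using K_in[of t] unfolding A_Suc by simp
  have A2: "A (Suc t) > 2 * cc ?g" using A1 cc_mono[of t] by simp
  have "?q ^ ?n * A (Suc t) \<le> cc ?g" by (rule K_notin)
  hence "?q ^ ?n * (2 * cc ?g) < cc ?g"
    using A2 qp by (smt (verit) mult_strict_left_mono zero_less_power)
  hence h: "?q ^ ?n < 1 / 2" using c by (simp add: field_simps)
  have "1 + real ?n * (?q - 1) \<le> (1 + (?q - 1)) ^ ?n" by (rule Bernoulli_inequality) (use qp in simp)
  hence "1 - real ?n * (1 - ?q) < 1 / 2" using h by (simp add: algebra_simps)
  hence "real ?n * (1 - ?q) > 1 / 2" by simp
  moreover have "real ?n * (1 - ?q) \<le> real ?n * (2 * eta * ?g)" using qp by (intro mult_left_mono) auto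
  ultimately have "real ?n * (2 * eta * ?g) > 1 / 2" by linarith
  moreover have "(real (K (Suc t)) + 1) * ?g * (4 * eta) = 2 * (real ?n * (2 * eta * ?g))" by (simp add: algebra_simps)
  ultimately have "(real (K (Suc t)) + 1) * ?g * (4 * eta) > 1" by linarith
  thus ?thesis using eta by (simp add: field_simps)
qed

definition beta :: real where "beta = th * (2 - L * g0) * (1 - eta / L) / 4"

lemma beta_pos: "beta > 0"
proof -
  have "L * g0 < 2" using g0 L0 by (simp add: pos_less_divide_eq mult.commute)
  moreover have "eta / L < 1" using eta Leta by simp
  ultimately show ?thesis using th by (simp add: beta_def)
qed

lemma pow_le_inv: assumes "0 \<le> a" "a \<le> 1" shows "(1 - a) ^ n * (1 + real n * a) \<le> 1"
proof -
  have "1 + real n * a \<le> (1 + a) ^ n" using Bernoulli_inequality[of a n] assms by simp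
  hence "(1 - a) ^ n * (1 + real n * a) \<le> (1 - a) ^ n * (1 + a) ^ n"
    using assms by (intro mult_left_mono) auto
  also have "\<dots> = (1 - a * a) ^ n" by (simp add: power_mult_distrib[symmetric] algebra_simps)
  also have "\<dots> \<le> 1" using assms by (intro power_le_one) (auto simp: mult_le_one)
  finally show ?thesis .
qed

definition Cup :: real where "Cup = 1 / (beta * eta * (2 - L * g0))"

lemma K_upper: "real (K (Suc t)) * gam (Suc t) \<le> Cup"
proof -
  let ?g = "gam (Suc t)" let ?q = "q ?g" let ?k = "K (Suc t)"
  have qp: "0 < ?q" "?q < 1" "1 - ?q \<ge> eta * ?g * (2 - L * g0)" using q_props[OF gam_pos gam_le] by auto
  have qs: "q (gam t) > 0" "q (gam t) \<ge> 1 - eta / L" using q_props[OF gam_pos gam_le] by auto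
  have cs: "cc (gam t) > 0" by (rule cc_pos[OF gam_pos gam_le])
  have Lg0: "2 - L * g0 > 0" using g0 L0 by (simp add: pos_less_divide_eq mult.commute)
  have Aup: "A (Suc t) * q (gam t) \<le> 2 * cc (gam t)"
    using K_notin[of t] unfolding A_Suc by (simp add: algebra_simps)
  have Ap: "A (Suc t) > 0" using invariant[of "Suc t"] cc_pos[OF gam_pos gam_le, of "Suc t"] by simp
  have "?q ^ ?k * A (Suc t) > cc ?g" by (rule K_in)
  hence "?q ^ ?k * A (Suc t) * q (gam t) > cc ?g * q (gam t)" using qs by simp
  hence "?q ^ ?k * (2 * cc (gam t)) > cc ?g * q (gam t)"
    using Aup qp by (smt (verit) mult.assoc mult_left_mono zero_le_power)
  moreover have "cc ?g * q (gam t) \<ge> cc (gam t) * (th * (2 - L * g0) / 2) * (1 - eta / L)"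
  proof -
    have "1 - eta / L > 0" using eta Leta by simp
    moreover have "cc (gam t) * (th * (2 - L * g0) / 2) \<ge> 0" using cs th Lg0 by simp
    ultimately show ?thesis using cc_ratio_low[of t] qs by (intro mult_mono) auto
  qed
  ultimately have "?q ^ ?k * (2 * cc (gam t)) > cc (gam t) * (th * (2 - L * g0) / 2) * (1 - eta / L)" by simp
  moreover have "?q ^ ?k * (2 * cc (gam t)) = cc (gam t) * (?q ^ ?k * 2)" by simp
  moreover have "cc (gam t) * (th * (2 - L * g0) / 2) * (1 - eta / L) = cc (gam t) * ((th * (2 - L * g0) / 2) * (1 - eta / L))" by simp
  ultimately have "cc (gam t) * ((th * (2 - L * g0) / 2) * (1 - eta / L)) < cc (gam t) * (?q ^ ?k * 2)" by simp
  hence "?q ^ ?k * 2 > (th * (2 - L * g0) / 2) * (1 - eta / L)" using mult_less_cancel_left_pos[OF cs] by blast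
  moreover have "beta = (th * (2 - L * g0) / 2 * (1 - eta / L)) / 2" by (simp add: beta_def)
  ultimately have b: "?q ^ ?k > beta"
    by (metis (no_types) field_sum_of_halves mult_2_right divide_less_eq_numeral1(1) mult.commute)
  let ?a = "1 - ?q"
  have "(1 - ?a) ^ ?k * (1 + real ?k * ?a) \<le> 1" by (rule pow_le_inv) (use qp in auto)
  hence "?q ^ ?k * (1 + real ?k * ?a) \<le> 1" by simp
  hence "beta * (1 + real ?k * ?a) < 1" using b qp
    by (smt (verit) mult_strict_right_mono zero_le_mult_iff of_nat_0_le_iff)
  hence "beta * (real ?k * ?a) < 1" using beta_pos by (simp add: algebra_simps)
  moreover have "beta * (real ?k * (eta * ?g * (2 - L * g0))) \<le> beta * (real ?k * ?a)"
    using qp beta_pos by (intro mult_left_mono) auto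
  ultimately have "real ?k * ?g * (beta * eta * (2 - L * g0)) < 1" by (simp add: algebra_simps)
  thus ?thesis unfolding Cup_def using beta_pos eta Lg0 by (simp add: field_simps)
qed

end


context casc begin

abbreviation Kbar :: "nat \<Rightarrow> nat" where "Kbar t \<equiv> casc_Kbar eta L g0 th nu D t"
definition tau :: "nat \<Rightarrow> nat" where "tau k = (LEAST t. k \<le> Kbar t)"

lemma step_eq: "casc_step eta L g0 th nu D k = gam (tau k)"
  by (simp add: casc_step_def tau_def gam_def)

lemma Kbar_Suc: "Kbar (Suc t) = Kbar t + K (Suc t)"
  by (simp add: casc_Kbar_def)

lemma Kbar_0: "Kbar 0 = K 0" by (simp add: casc_Kbar_def)

lemma Kbar_mono: "s \<le> t \<Longrightarrow> Kbar s \<le> Kbar t"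
  unfolding casc_Kbar_def by (rule sum_mono2) auto

lemma K_le_Kbar: "K t \<le> Kbar t"
  unfolding casc_Kbar_def by (rule member_le_sum) auto

lemma geo_sum: "(\<Sum>t\<le>T. gam t) \<le> g0 / (1 - th)"
proof -
  have "(\<Sum>t\<le>T. gam t) = g0 * (\<Sum>t<Suc T. th ^ t)"
    by (simp add: gam_def sum_distrib_left lessThan_Suc_atMost mult.commute)
  also have "\<dots> = g0 * ((1 - th ^ Suc T) / (1 - th))" by (subst sum_gp_strict) (use th in auto)
  also have "\<dots> \<le> g0 * (1 / (1 - th))" using th g0
    by (intro mult_left_mono divide_right_mono) auto
  finally show ?thesis by simp
qed

lemma K_big: "\<exists>t. n \<le> K t"
proof -
  have "1 / (4 * eta * g0 * (real n + 1)) > 0" using eta g0 by simp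
  then obtain t where t: "th ^ t < 1 / (4 * eta * g0 * (real n + 1))" using real_arch_pow_inv th by blast
  have "th ^ Suc t \<le> th ^ t" using th by (simp add: power_decreasing)
  hence t': "th ^ Suc t * (4 * eta * g0 * (real n + 1)) < 1" using t eta g0
    by (simp add: pos_less_divide_eq) (smt (verit) mult_right_mono zero_le_mult_iff mult_pos_pos of_nat_0_le_iff)
  have "(real (K (Suc t)) + 1) * gam (Suc t) > 1 / (4 * eta)" by (rule K_lower)
  hence a: "(real (K (Suc t)) + 1) * th ^ Suc t * g0 * (4 * eta) > 1" using eta
    by (simp add: gam_def field_simps)
  have "real n + 1 \<le> real (K (Suc t)) + 1"
  proof (rule ccontr)
    assume "\<not> ?thesis"
    hence "(real (K (Suc t)) + 1) * (th ^ Suc t * g0 * (4 * eta)) \<le> (real n + 1) * (th ^ Suc t * g0 * (4 * eta))"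
      using th g0 eta by (intro mult_right_mono) auto
    thus False using a t' by (simp add: algebra_simps)
  qed
  thus ?thesis by auto
qed

lemma ex_Kbar: "\<exists>t. k \<le> Kbar t"
  using K_big[of k] K_le_Kbar order_trans by blast

lemma tau_0: "k \<le> Kbar 0 \<Longrightarrow> tau k = 0"
  unfolding tau_def by (rule Least_equality) auto

lemma tau_stage: assumes "Kbar T < k" "k \<le> Kbar (Suc T)" shows "tau k = Suc T"
  unfolding tau_def
proof (rule Least_equality)
  show "k \<le> Kbar (Suc T)" by fact
  fix y assume "k \<le> Kbar y"
  show "Suc T \<le> y"
  proof (rule ccontr)
    assume "\<not> Suc T \<le> y" hence "y \<le> T" by simp
    hence "Kbar y \<le> Kbar T" by (rule Kbar_mono)
    thus False using assms \<open>k \<le> Kbar y\<close> by simp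
  qed
qed

lemma sum_stage: "(\<Sum>k\<le>Kbar T. h (tau k)) = h 0 + (\<Sum>t\<le>T. real (K t) * h t)"
proof (induction T)
  case 0
  have "(\<Sum>k\<le>Kbar 0. h (tau k)) = (\<Sum>k\<le>Kbar 0. h 0)" by (rule sum.cong) (auto simp: tau_0)
  thus ?case by (simp add: Kbar_0 algebra_simps)
next
  case (Suc T)
  have un: "{..Kbar (Suc T)} = {..Kbar T} \<union> {Kbar T<..Kbar (Suc T)}"
    using Kbar_mono[of T "Suc T"] by auto
  have "(\<Sum>k\<le>Kbar (Suc T). h (tau k)) = (\<Sum>k\<le>Kbar T. h (tau k)) + (\<Sum>k\<in>{Kbar T<..Kbar (Suc T)}. h (tau k))"
    unfolding un by (rule sum.union_disjoint) auto
  also have "(\<Sum>k\<in>{Kbar T<..Kbar (Suc T)}. h (tau k)) = (\<Sum>k\<in>{Kbar T<..Kbar (Suc T)}. h (Suc T))"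
    by (rule sum.cong) (auto simp: tau_stage)
  also have "\<dots> = real (K (Suc T)) * h (Suc T)" by (simp add: Kbar_Suc)
  finally show ?case using Suc by simp
qed

lemma Cup_pos: "Cup > 0"
proof -
  have "2 - L * g0 > 0" using g0 L0 by (simp add: pos_less_divide_eq mult.commute)
  thus ?thesis using beta_pos eta by (simp add: Cup_def)
qed

lemma step_sq_summable: "summable (\<lambda>k. (casc_step eta L g0 th nu D k)\<^sup>2)"
proof (rule summableI_nonneg_bounded)
  fix n
  obtain T where T: "n \<le> Kbar T" using ex_Kbar by blast
  have "(\<Sum>i<n. (casc_step eta L g0 th nu D i)\<^sup>2) \<le> (\<Sum>k\<le>Kbar T. (gam (tau k))\<^sup>2)"
    unfolding step_eq using T by (intro sum_mono2) auto
  also have "\<dots> = (gam 0)\<^sup>2 + (\<Sum>t\<le>T. real (K t) * (gam t)\<^sup>2)" by (rule sum_stage)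
  also have "(\<Sum>t\<le>T. real (K t) * (gam t)\<^sup>2) \<le> (\<Sum>t\<le>T. (if t = 0 then real (K 0) * g0\<^sup>2 else 0) + Cup * gam t)"
  proof (rule sum_mono)
    fix t assume "t \<in> {..T}"
    show "real (K t) * (gam t)\<^sup>2 \<le> (if t = 0 then real (K 0) * g0\<^sup>2 else 0) + Cup * gam t"
    proof (cases t)
      case 0 thus ?thesis using Cup_pos gam_pos[of 0] by (simp add: gam_def)
    next
      case (Suc s)
      have "real (K t) * (gam t)\<^sup>2 = (real (K (Suc s)) * gam (Suc s)) * gam t" by (simp add: Suc power2_eq_square)
      also have "\<dots> \<le> Cup * gam t" using K_upper[of s] gam_pos[of t] by (intro mult_right_mono) auto
      finally show ?thesis using Suc by simp
    qed
  qed
  also have "\<dots> = real (K 0) * g0\<^sup>2 + Cup * (\<Sum>t\<le>T. gam t)"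
    by (simp add: sum.distrib sum_distrib_left)
  also have "\<dots> \<le> real (K 0) * g0\<^sup>2 + Cup * (g0 / (1 - th))"
    using geo_sum Cup_pos by (intro add_left_mono mult_left_mono) auto
  finally show "(\<Sum>i<n. (casc_step eta L g0 th nu D i)\<^sup>2) \<le> (gam 0)\<^sup>2 + (real (K 0) * g0\<^sup>2 + Cup * (g0 / (1 - th)))"
    by simp
qed simp

lemma step_pos: "casc_step eta L g0 th nu D k > 0" unfolding step_eq by (rule gam_pos)
lemma step_le: "casc_step eta L g0 th nu D k \<le> g0" unfolding step_eq by (rule gam_le)

lemma step_not_summable: "\<not> summable (\<lambda>k. casc_step eta L g0 th nu D k)"
proof
  assume sm: "summable (\<lambda>k. casc_step eta L g0 th nu D k)"
  define s where "s = suminf (\<lambda>k. casc_step eta L g0 th nu D k)"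
  obtain T :: nat where T: "real T > 4 * eta * (s + g0 / (1 - th) + 1)" using reals_Archimedean2 by blast
  have "(\<Sum>k\<le>Kbar T. casc_step eta L g0 th nu D k) \<le> s"
    unfolding s_def using sm by (intro sum_le_suminf) (auto intro: less_imp_le step_pos)
  moreover have "(\<Sum>k\<le>Kbar T. casc_step eta L g0 th nu D k) = gam 0 + (\<Sum>t\<le>T. real (K t) * gam t)"
    unfolding step_eq by (rule sum_stage)
  moreover have "(\<Sum>t\<le>T. real (K t) * gam t) \<ge> (\<Sum>t\<le>T. 1 / (4 * eta) - gam t) - 1 / (4 * eta)"
  proof -
    have "(\<Sum>t\<le>T. 1 / (4 * eta) - gam t) \<le> (\<Sum>t\<le>T. real (K t) * gam t + (if t = 0 then 1 / (4 * eta) else 0))"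
    proof (rule sum_mono)
      fix t assume "t \<in> {..T}"
      show "1 / (4 * eta) - gam t \<le> real (K t) * gam t + (if t = 0 then 1 / (4 * eta) else 0)"
      proof (cases t)
        case 0 thus ?thesis using gam_pos[of 0] by (simp add: gam_def) (smt (verit) mult_nonneg_nonneg of_nat_0_le_iff g0)
      next
        case (Suc s)
        thus ?thesis using K_lower[of s] by (simp add: algebra_simps)
      qed
    qed
    also have "\<dots> = (\<Sum>t\<le>T. real (K t) * gam t) + 1 / (4 * eta)" by (simp add: sum.distrib)
    finally show ?thesis by simp
  qed
  moreover have "(\<Sum>t\<le>T. 1 / (4 * eta) - gam t) \<ge> real (Suc T) / (4 * eta) - g0 / (1 - th)"
    using geo_sum[of T] by (simp add: sum_subtractf)
  moreover have "real (Suc T) / (4 * eta) - 1 / (4 * eta) = real T / (4 * eta)" by (simp add: diff_divide_distrib[symmetric])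
  moreover have "real T / (4 * eta) > s + g0 / (1 - th) + 1" using T eta by (simp add: field_simps)
  ultimately show False using gam_pos[of 0] by linarith
qed

end


lemma det_conv:
  fixes V g b S :: "nat \<Rightarrow> real" and c :: real
  assumes V0: "\<And>k. V k \<ge> 0" and g0: "\<And>k. g k \<ge> 0" and c: "c > 0"
    and ns: "\<not> summable g" and bs: "summable b" and b0: "\<And>k. b k \<ge> 0"
    and Sc: "convergent S"
    and rec: "\<And>k. V (Suc k) \<le> V k - c * g k * V k + b k - (S (Suc k) - S k)"
  shows "V \<longlonglongrightarrow> 0"
proof -
  define W where "W k = V k + S k - (\<Sum>j<k. b j)" for k
  have Wdec: "W (Suc k) \<le> W k - c * g k * V k" for k
    using rec[of k] by (simp add: W_def)
  have cgV: "c * g k * V k \<ge> 0" for k using c g0 V0 by simp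
  have decW: "decseq W" using Wdec cgV by (intro decseq_SucI) (smt (verit))
  obtain B where B: "\<And>k. norm (S k) \<le> B" using convergent_imp_Bseq[OF Sc] by (auto simp: Bseq_def)
  have bsum: "(\<Sum>j<k. b j) \<le> suminf b" for k using bs b0 by (intro sum_le_suminf) auto
  have Wlow: "\<forall>k. - B - suminf b \<le> W k"
  proof
    fix k show "- B - suminf b \<le> W k" using V0[of k] B[of k] bsum[of k] by (simp add: W_def)
  qed
  obtain w where w: "W \<longlonglongrightarrow> w" "\<forall>i. w \<le> W i" using decseq_convergent[OF decW Wlow] by blast
  obtain s where s: "S \<longlonglongrightarrow> s" using Sc by (auto simp: convergent_def)
  have Vlim: "V \<longlonglongrightarrow> w - s + suminf b"
  proof -
    have "(\<lambda>k. W k - S k + (\<Sum>j<k. b j)) \<longlonglongrightarrow> w - s + suminf b"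
      by (intro tendsto_intros w s summable_LIMSEQ bs)
    moreover have "(\<lambda>k. W k - S k + (\<Sum>j<k. b j)) = V" by (auto simp: W_def)
    ultimately show ?thesis by simp
  qed
  define v where "v = w - s + suminf b"
  have v0: "v \<ge> 0" using Vlim V0 unfolding v_def by (intro LIMSEQ_le_const) auto
  have psum: "(\<Sum>k<n. c * g k * V k) \<le> W 0 - w" for n
  proof -
    have "(\<Sum>k<n. c * g k * V k) \<le> W 0 - W n"
    proof (induction n)
      case 0 thus ?case by simp
    next
      case (Suc n) thus ?case using Wdec[of n] by simp
    qed
    thus ?thesis using w(2)[rule_format, of n] by simp
  qed
  have sm: "summable (\<lambda>k. c * g k * V k)"
    by (rule summableI_nonneg_bounded[OF cgV psum])
  show ?thesis
  proof (cases "v = 0")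
    case True thus ?thesis using Vlim v_def by simp
  next
    case False
    hence vp: "v > 0" using v0 by simp
    have "eventually (\<lambda>k. V k > v / 2) sequentially"
      using Vlim vp unfolding v_def[symmetric] by (intro order_tendstoD(1)) auto
    hence "eventually (\<lambda>k. norm (g k) \<le> (2 / (c * v)) * (c * g k * V k)) sequentially"
    proof (rule eventually_mono)
      fix k assume a: "V k > v / 2"
      have "g k * (c * v / 2) \<le> g k * (c * V k)" using a g0[of k] c by (intro mult_left_mono) auto
      hence "g k * (c * v) \<le> 2 * (c * g k * V k)" by (simp add: algebra_simps)
      thus "norm (g k) \<le> (2 / (c * v)) * (c * g k * V k)" using g0[of k] c vp
        by (simp add: field_simps)
    qed
    hence "summable g" by (rule summable_comparison_test_ev) (intro summable_mult sm)
    thus ?thesis using ns by simp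
  qed
qed



lemma dir_lim:
  fixes f :: "'v::euclidean_space \<Rightarrow> real"
  assumes "(f has_derivative (\<lambda>h. gv \<bullet> h)) (at x)"
  shows "((\<lambda>t. (f (x + t *\<^sub>R v) - f x) / t) \<longlongrightarrow> gv \<bullet> v) (at_right 0)"
proof -
  have l: "((\<lambda>t. x + t *\<^sub>R v) has_derivative (\<lambda>t. t *\<^sub>R v)) (at 0)"
    by (auto intro!: derivative_eq_intros)
  have fd': "(f has_derivative (\<lambda>h. gv \<bullet> h)) (at ((\<lambda>t. x + t *\<^sub>R v) 0))" using assms by simp
  have "((\<lambda>t. f (x + t *\<^sub>R v)) has_derivative (\<lambda>t. gv \<bullet> (t *\<^sub>R v))) (at 0)"
    using has_derivative_compose[OF l fd'] .
  hence "((\<lambda>t. f (x + t *\<^sub>R v)) has_field_derivative (gv \<bullet> v)) (at 0)"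
    unfolding has_field_derivative_def by (rule has_derivative_eq_rhs) (auto simp: fun_eq_iff)
  hence "((\<lambda>y. (f (x + y *\<^sub>R v) - f x) / (y - 0)) \<longlongrightarrow> gv \<bullet> v) (at 0)"
    unfolding has_field_derivative_iff by simp
  hence "((\<lambda>y. (f (x + y *\<^sub>R v) - f x) / y) \<longlongrightarrow> gv \<bullet> v) (at 0)" by simp
  thus ?thesis by (rule tendsto_mono[OF at_le, rotated]) simp
qed

lemma sc_grad:
  fixes f :: "'v::euclidean_space \<Rightarrow> real"
  assumes sc: "strongly_convex_on X eta f" and x: "x \<in> X" and y: "y \<in> X"
    and fd: "(f has_derivative (\<lambda>h. gradf x \<bullet> h)) (at x)"
  shows "gradf x \<bullet> (y - x) \<le> f y - f x - eta / 2 * (norm (y - x))\<^sup>2"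
proof -
  have lim1: "((\<lambda>t. (f (x + t *\<^sub>R (y - x)) - f x) / t) \<longlongrightarrow> gradf x \<bullet> (y - x)) (at_right 0)"
    by (rule dir_lim[OF fd])
  have lim2: "((\<lambda>t. f y - f x - eta / 2 * (1 - t) * (norm (y - x))\<^sup>2) \<longlongrightarrow> f y - f x - eta / 2 * (1 - 0) * (norm (y - x))\<^sup>2) (at_right 0)"
    by (intro tendsto_intros)
  have ev: "eventually (\<lambda>t. (f (x + t *\<^sub>R (y - x)) - f x) / t \<le> f y - f x - eta / 2 * (1 - t) * (norm (y - x))\<^sup>2) (at_right (0::real))"
    unfolding eventually_at_right_field
  proof (intro exI[of _ 1] conjI allI impI)
    show "(0::real) < 1" by simp
    fix t :: real assume t0: "0 < t" and t1: "t < 1"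
    note t = t0 t1
    have "x + t *\<^sub>R (y - x) = (1 - t) *\<^sub>R x + t *\<^sub>R y" by (simp add: algebra_simps)
    moreover have "f ((1 - t) *\<^sub>R x + t *\<^sub>R y) \<le> (1 - t) * f x + t * f y - eta / 2 * t * (1 - t) * (norm (x - y))\<^sup>2"
      using sc x y t unfolding strongly_convex_on_def by auto
    ultimately have "f (x + t *\<^sub>R (y - x)) - f x \<le> t * (f y - f x - eta / 2 * (1 - t) * (norm (y - x))\<^sup>2)"
      by (simp add: algebra_simps norm_minus_commute)
    thus "(f (x + t *\<^sub>R (y - x)) - f x) / t \<le> f y - f x - eta / 2 * (1 - t) * (norm (y - x))\<^sup>2"
      using t by (simp add: divide_le_eq mult.commute)
  qed
  have "gradf x \<bullet> (y - x) \<le> f y - f x - eta / 2 * (1 - 0) * (norm (y - x))\<^sup>2"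
    using tendsto_le[OF _ lim2 lim1 ev] by simp
  thus ?thesis by simp
qed

lemma opt_cond:
  fixes f :: "'v::euclidean_space \<Rightarrow> real"
  assumes cX: "convex X" and x: "x \<in> X" and y: "y \<in> X" and min: "\<forall>z\<in>X. f x \<le> f z"
    and fd: "(f has_derivative (\<lambda>h. gradf x \<bullet> h)) (at x)"
  shows "gradf x \<bullet> (y - x) \<ge> 0"
proof -
  have lim1: "((\<lambda>t. (f (x + t *\<^sub>R (y - x)) - f x) / t) \<longlongrightarrow> gradf x \<bullet> (y - x)) (at_right 0)"
    by (rule dir_lim[OF fd])
  have ev: "eventually (\<lambda>t. 0 \<le> (f (x + t *\<^sub>R (y - x)) - f x) / t) (at_right (0::real))"
    unfolding eventually_at_right_field
  proof (intro exI[of _ 1] conjI allI impI)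
    show "(0::real) < 1" by simp
    fix t :: real assume t0: "0 < t" and t1: "t < 1"
    note t = t0 t1
    have "x + t *\<^sub>R (y - x) = (1 - t) *\<^sub>R x + t *\<^sub>R y" by (simp add: algebra_simps)
    moreover have "(1 - t) *\<^sub>R x + t *\<^sub>R y \<in> X" using convexD_alt[OF cX x y, of t] t by (simp add: algebra_simps)
    ultimately have "f x \<le> f (x + t *\<^sub>R (y - x))" using min by simp
    thus "0 \<le> (f (x + t *\<^sub>R (y - x)) - f x) / t" using t by simp
  qed
  show ?thesis using tendsto_le[OF _ lim1 tendsto_const ev] by simp
qed

lemma fixed_point:
  fixes X :: "'v::euclidean_space set"
  assumes cX: "convex X" and clX: "closed X" and xs: "xs \<in> X" and g: "\<forall>y\<in>X. gs \<bullet> (y - xs) \<ge> 0"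
    and gam: "gam \<ge> 0"
  shows "closest_point X (xs - gam *\<^sub>R gs) = xs"
proof -
  have "\<forall>z\<in>X. dist (xs - gam *\<^sub>R gs) xs \<le> dist (xs - gam *\<^sub>R gs) z"
  proof
    fix z assume z: "z \<in> X"
    have "(norm (xs - gam *\<^sub>R gs - z))\<^sup>2 = (norm (xs - z))\<^sup>2 + 2 * gam * (gs \<bullet> (z - xs)) + (norm (gam *\<^sub>R gs))\<^sup>2"
      by (simp only: power2_norm_eq_inner) (simp add: inner_diff inner_add algebra_simps inner_commute power2_eq_square)
    also have "\<dots> \<ge> (norm (gam *\<^sub>R gs))\<^sup>2" using g z gam by simp
    finally have "norm (gam *\<^sub>R gs) \<le> norm (xs - gam *\<^sub>R gs - z)" by (simp add: power2_le_iff_abs_le)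
    thus "dist (xs - gam *\<^sub>R gs) xs \<le> dist (xs - gam *\<^sub>R gs) z" by (simp add: dist_norm)
  qed
  thus ?thesis using closest_point_unique[OF cX clX xs] by simp
qed

lemma proj_step:
  fixes X :: "'v::euclidean_space set"
  assumes cX: "convex X" and clX: "closed X" and ne: "X \<noteq> {}" and xs: "xs \<in> X"
    and fp: "closest_point X (xs - gam *\<^sub>R gs) = xs"
    and mono: "(g - gs) \<bullet> (x - xs) \<ge> eta * (norm (x - xs))\<^sup>2"
    and lip: "norm (g - gs) \<le> L * norm (x - xs)" and L: "L \<ge> 0" and gam: "gam \<ge> 0"
  shows "(norm (closest_point X (x - gam *\<^sub>R (g + w)) - xs))\<^sup>2 \<le>
    (norm (x - xs))\<^sup>2 - 2 * eta * gam * (norm (x - xs))\<^sup>2 + gam\<^sup>2 * L\<^sup>2 * (norm (x - xs))\<^sup>2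
    + gam\<^sup>2 * (norm w)\<^sup>2 - 2 * gam * (w \<bullet> (x - xs - gam *\<^sub>R (g - gs)))"
proof -
  define u where "u = x - xs - gam *\<^sub>R (g - gs)"
  have "dist (closest_point X (x - gam *\<^sub>R (g + w))) (closest_point X (xs - gam *\<^sub>R gs)) \<le> dist (x - gam *\<^sub>R (g + w)) (xs - gam *\<^sub>R gs)"
    by (rule closest_point_lipschitz[OF cX clX ne])
  hence "norm (closest_point X (x - gam *\<^sub>R (g + w)) - xs) \<le> norm (u - gam *\<^sub>R w)"
    unfolding fp dist_norm u_def by (simp add: algebra_simps)
  hence a: "(norm (closest_point X (x - gam *\<^sub>R (g + w)) - xs))\<^sup>2 \<le> (norm (u - gam *\<^sub>R w))\<^sup>2"
    by (simp add: power_mono)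
  have b: "(norm (u - gam *\<^sub>R w))\<^sup>2 = (norm u)\<^sup>2 - 2 * gam * (w \<bullet> u) + gam\<^sup>2 * (norm w)\<^sup>2"
    by (simp only: power2_norm_eq_inner) (simp add: inner_diff inner_commute power2_eq_square algebra_simps)
  have c: "(norm u)\<^sup>2 = (norm (x - xs))\<^sup>2 - 2 * gam * ((g - gs) \<bullet> (x - xs)) + gam\<^sup>2 * (norm (g - gs))\<^sup>2"
    unfolding u_def by (simp only: power2_norm_eq_inner) (simp add: inner_diff inner_commute power2_eq_square algebra_simps)
  have d: "gam\<^sup>2 * (norm (g - gs))\<^sup>2 \<le> gam\<^sup>2 * (L\<^sup>2 * (norm (x - xs))\<^sup>2)"
    using lip L by (intro mult_left_mono) (auto simp: power_mult_distrib[symmetric] power_mono)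
  have e: "2 * gam * ((g - gs) \<bullet> (x - xs)) \<ge> 2 * gam * (eta * (norm (x - xs))\<^sup>2)"
    using mono gam by (intro mult_left_mono) auto
  show ?thesis using a b c d e unfolding u_def[symmetric] by (simp add: algebra_simps)
qed



lemma cara:
  fixes h :: "'v::euclidean_space \<Rightarrow> 'b \<Rightarrow> real" and U :: "'v set"
  assumes U: "open U" and hc: "\<And>z. z \<in> space N \<Longrightarrow> continuous_on U (\<lambda>y. h y z)"
    and hm: "\<And>y. y \<in> U \<Longrightarrow> h y \<in> borel_measurable N"
    and phi[measurable]: "phi \<in> borel_measurable M" and psi[measurable]: "psi \<in> measurable M N"
  shows "(\<lambda>\<omega>. if phi \<omega> \<in> U then h (phi \<omega>) (psi \<omega>) else 0) \<in> borel_measurable M"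
proof (cases "U = {}")
  case True thus ?thesis by simp
next
  case False
  have Ub[measurable]: "U \<in> sets borel" using U by simp
  obtain D :: "'v set" where D: "countable D" "\<And>X. open X \<Longrightarrow> X \<noteq> {} \<Longrightarrow> \<exists>d\<in>D. d \<in> X"
    by (rule countable_dense_setE) blast
  define Q where "Q = D \<inter> U"
  have dense: "\<exists>d\<in>Q. dist d y < r" if "y \<in> U" "r > 0" for y r
  proof -
    have "open (ball y r \<inter> U)" using U by auto
    moreover have "y \<in> ball y r \<inter> U" using that by auto
    ultimately obtain d where "d \<in> D" "d \<in> ball y r \<inter> U" using D(2) by blast
    thus ?thesis unfolding Q_def by (auto simp: dist_commute)
  qed
  have Qne: "Q \<noteq> {}" using dense[of _ 1] False by auto
  have Qc: "countable Q" using D(1) by (simp add: Q_def)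
  define e where "e = from_nat_into Q"
  have eQ: "e m \<in> Q" for m unfolding e_def using Qne by (rule from_nat_into)
  have eU: "e m \<in> U" for m using eQ[of m] by (simp add: Q_def)
  have edense: "\<exists>m. dist (e m) y < r" if yU: "y \<in> U" and r0: "r > 0" for y r
  proof -
    obtain d where "d \<in> Q" "dist d y < r" using dense[OF yU r0] by blast
    moreover have "d \<in> range e" using \<open>d \<in> Q\<close> Qc unfolding e_def by (simp add: range_from_nat_into[OF Qne])
    ultimately show ?thesis by auto
  qed
  define mm where "mm n y = (LEAST m. dist (e m) y < 1 / Suc n)" for n y
  have mm: "dist (e (mm n y)) y < 1 / Suc n" if "y \<in> U" for n y
    unfolding mm_def by (rule LeastI_ex) (rule edense[OF that], simp)
  define H where "H n \<omega> = (if phi \<omega> \<in> U then h (e (mm n (phi \<omega>))) (psi \<omega>) else 0)" for n \<omega>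
  have Hm: "H n \<in> borel_measurable M" for n
  proof -
    have g: "(\<lambda>\<omega>. mm n (phi \<omega>)) \<in> measurable M (count_space UNIV)"
      unfolding mm_def by measurable
    have f: "(\<lambda>\<omega>. if phi \<omega> \<in> U then h (e m) (psi \<omega>) else 0) \<in> borel_measurable M" for m
    proof -
      have [measurable]: "h (e m) \<in> borel_measurable N" by (rule hm[OF eU])
      show ?thesis by measurable
    qed
    have "(\<lambda>\<omega>. (\<lambda>m \<omega>. if phi \<omega> \<in> U then h (e m) (psi \<omega>) else 0) (mm n (phi \<omega>)) \<omega>) \<in> borel_measurable M"
      by (rule measurable_compose_countable[OF f g])
    thus ?thesis unfolding H_def by simp
  qed
  show ?thesis
  proof (rule borel_measurable_LIMSEQ_real[OF _ Hm])
    fix \<omega> assume \<omega>: "\<omega> \<in> space M"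
    show "(\<lambda>n. H n \<omega>) \<longlonglongrightarrow> (if phi \<omega> \<in> U then h (phi \<omega>) (psi \<omega>) else 0)"
    proof (cases "phi \<omega> \<in> U")
      case False thus ?thesis by (simp add: H_def)
    next
      case True
      have conv: "(\<lambda>n. e (mm n (phi \<omega>))) \<longlonglongrightarrow> phi \<omega>"
      proof (rule tendsto_dist_iff[THEN iffD2], rule tendsto_sandwich[of "\<lambda>_. 0" _ _ "\<lambda>n. 1 / Suc n"])
        show "\<forall>\<^sub>F n in sequentially. 0 \<le> dist (e (mm n (phi \<omega>))) (phi \<omega>)" by simp
        show "\<forall>\<^sub>F n in sequentially. dist (e (mm n (phi \<omega>))) (phi \<omega>) \<le> 1 / real (Suc n)"
          using mm[OF True] by (simp add: less_imp_le)
        show "(\<lambda>n. 1 / real (Suc n)) \<longlonglongrightarrow> 0" by (rule LIMSEQ_Suc) (rule lim_const_over_n)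
      qed simp
      have psiN: "psi \<omega> \<in> space N" using psi \<omega> by (auto simp: measurable_def)
      have "(\<lambda>n. h (e (mm n (phi \<omega>))) (psi \<omega>)) \<longlonglongrightarrow> h (phi \<omega>) (psi \<omega>)"
        by (rule continuous_on_tendsto_compose[OF hc[OF psiN] conv True]) (simp add: eU)
      thus ?thesis using True by (simp add: H_def)
    qed
  qed
qed



lemma grad_meas:
  fixes F :: "'v::euclidean_space \<Rightarrow> 'b \<Rightarrow> real" and G :: "'v \<Rightarrow> 'b \<Rightarrow> 'v"
  assumes U: "open U" and XU: "X \<subseteq> U"
    and Fc: "\<And>z. z \<in> space N \<Longrightarrow> continuous_on U (\<lambda>y. F y z)"
    and Fm: "\<And>y. y \<in> U \<Longrightarrow> F y \<in> borel_measurable N"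
    and Fg: "\<And>y z. y \<in> X \<Longrightarrow> z \<in> space N \<Longrightarrow> ((\<lambda>u. F u z) has_derivative (\<lambda>h. G y z \<bullet> h)) (at y)"
    and phi[measurable]: "phi \<in> borel_measurable M" and phiX: "\<And>\<omega>. \<omega> \<in> space M \<Longrightarrow> phi \<omega> \<in> X"
    and psi[measurable]: "psi \<in> measurable M N"
  shows "(\<lambda>\<omega>. G (phi \<omega>) (psi \<omega>)) \<in> borel_measurable M"
proof (rule borel_measurable_euclidean_space[THEN iffD2], rule ballI)
  fix i :: 'v assume i: "i \<in> Basis"
  define H where "H n \<omega> = ((if phi \<omega> + inverse (real n) *\<^sub>R i \<in> U then F (phi \<omega> + inverse (real n) *\<^sub>R i) (psi \<omega>) else 0)
      - (if phi \<omega> \<in> U then F (phi \<omega>) (psi \<omega>) else 0)) / inverse (real n)" for n \<omega>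
  have Hm: "H n \<in> borel_measurable M" for n
  proof -
    have [measurable]: "(\<lambda>\<omega>. phi \<omega> + inverse (real n) *\<^sub>R i) \<in> borel_measurable M" by measurable
    have [measurable]: "(\<lambda>\<omega>. if phi \<omega> + inverse (real n) *\<^sub>R i \<in> U then F (phi \<omega> + inverse (real n) *\<^sub>R i) (psi \<omega>) else 0) \<in> borel_measurable M"
      by (rule cara[OF U Fc Fm]) (auto)
    have [measurable]: "(\<lambda>\<omega>. if phi \<omega> \<in> U then F (phi \<omega>) (psi \<omega>) else 0) \<in> borel_measurable M"
      by (rule cara[OF U Fc Fm]) (auto)
    show ?thesis unfolding H_def by measurable
  qed
  show "(\<lambda>\<omega>. G (phi \<omega>) (psi \<omega>) \<bullet> i) \<in> borel_measurable M"
  proof (rule borel_measurable_LIMSEQ_real[OF _ Hm])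
    fix \<omega> assume \<omega>: "\<omega> \<in> space M"
    define y where "y = phi \<omega>"
    define z where "z = psi \<omega>"
    have yX: "y \<in> X" using phiX[OF \<omega>] by (simp add: y_def)
    have yU: "y \<in> U" using yX XU by auto
    have zN: "z \<in> space N" using psi \<omega> by (auto simp: measurable_def z_def)
    have dl: "((\<lambda>t. (F (y + t *\<^sub>R i) z - F y z) / t) \<longlongrightarrow> G y z \<bullet> i) (at_right 0)"
      by (rule dir_lim[OF Fg[OF yX zN]])
    have tl: "filterlim (\<lambda>n. inverse (real n)) (at_right (0::real)) sequentially"
      by (rule filterlim_compose[OF filterlim_inverse_at_right_top filterlim_real_sequentially])
    have c1: "(\<lambda>n. (F (y + inverse (real n) *\<^sub>R i) z - F y z) / inverse (real n)) \<longlonglongrightarrow> G y z \<bullet> i"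
      using filterlim_compose[OF dl tl] by simp
    obtain r where r: "r > 0" "ball y r \<subseteq> U" using U yU by (force simp: open_contains_ball)
    have tl0: "(\<lambda>n. inverse (real n)) \<longlonglongrightarrow> 0" by (rule tendsto_inverse_0_at_top[OF filterlim_real_sequentially])
    have "eventually (\<lambda>n. inverse (real n) < r) sequentially" using order_tendstoD(2)[OF tl0 r(1)] .
    hence "eventually (\<lambda>n. (F (y + inverse (real n) *\<^sub>R i) z - F y z) / inverse (real n) = H n \<omega>) sequentially"
    proof (rule eventually_mono)
      fix n assume n: "inverse (real n) < r"
      have "dist y (y + inverse (real n) *\<^sub>R i) < r" using n i by (simp add: dist_norm)
      hence "y + inverse (real n) *\<^sub>R i \<in> U" using r by auto
      thus "(F (y + inverse (real n) *\<^sub>R i) z - F y z) / inverse (real n) = H n \<omega>"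
        using yU by (simp add: H_def y_def z_def)
    qed
    from Lim_transform_eventually[OF c1 this]
    show "(\<lambda>n. H n \<omega>) \<longlonglongrightarrow> G (phi \<omega>) (psi \<omega>) \<bullet> i" by (simp add: y_def z_def)
  qed
qed



definition genF :: "'a measure \<Rightarrow> 'b measure \<Rightarrow> ('a \<Rightarrow> 'v::topological_space) \<Rightarrow> (nat \<Rightarrow> 'a \<Rightarrow> 'b) \<Rightarrow> nat \<Rightarrow> 'a set set" where
  "genF M N x0 xi k = {x0 -` A \<inter> space M | A. A \<in> sets borel} \<union> {xi j -` B \<inter> space M | j B. j < k \<and> B \<in> sets N}"

lemma genF_Pow: "genF M N x0 xi k \<subseteq> Pow (space M)"
  unfolding genF_def by auto

lemma filt_eq: "nat_filtration M N x0 xi k = sigma (space M) (genF M N x0 xi k)"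
  unfolding nat_filtration_def genF_def ..

lemma space_filt[simp]: "space (nat_filtration M N x0 xi k) = space M"
  unfolding filt_eq by (simp add: genF_Pow)

lemma sets_filt: "sets (nat_filtration M N x0 xi k) = sigma_sets (space M) (genF M N x0 xi k)"
  unfolding filt_eq by (simp add: genF_Pow)

lemma filt_mono: "j \<le> k \<Longrightarrow> sets (nat_filtration M N x0 xi j) \<subseteq> sets (nat_filtration M N x0 xi k)"
  unfolding sets_filt by (rule sigma_sets_subseteq) (unfold genF_def, blast dest: less_le_trans)

lemma filt_sub:
  assumes x0: "x0 \<in> borel_measurable M" and xi: "\<And>j. xi j \<in> measurable M N"
  shows "subalgebra M (nat_filtration M N x0 xi k)"
proof -
  have "genF M N x0 xi k \<subseteq> sets M"
    using x0 xi unfolding genF_def by (auto simp: measurable_sets)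
  hence "sigma_sets (space M) (genF M N x0 xi k) \<subseteq> sets M" by (rule sets.sigma_sets_subset)
  thus ?thesis unfolding subalgebra_def sets_filt by simp
qed

lemma filt_meas_from_mono:
  "j \<le> k \<Longrightarrow> f \<in> measurable (nat_filtration M N x0 xi j) K \<Longrightarrow> f \<in> measurable (nat_filtration M N x0 xi k) K"
  using filt_mono[of j k M N x0 xi] unfolding measurable_def by auto

lemma x0_filt:
  fixes x0 :: "'a \<Rightarrow> 'v::topological_space"
  assumes x0: "x0 \<in> borel_measurable M"
  shows "x0 \<in> borel_measurable (nat_filtration M N x0 xi k)"
proof (rule measurableI)
  fix A :: "'v set" assume "A \<in> sets borel"
  hence "x0 -` A \<inter> space M \<in> genF M N x0 xi k" unfolding genF_def by blast
  thus "x0 -` A \<inter> space (nat_filtration M N x0 xi k) \<in> sets (nat_filtration M N x0 xi k)"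
    unfolding sets_filt by auto
qed simp

lemma xi_filt:
  assumes xi: "xi j \<in> measurable M N" and jk: "j < k"
  shows "xi j \<in> measurable (nat_filtration M N x0 xi k) N"
proof (rule measurableI)
  fix x assume "x \<in> space (nat_filtration M N x0 xi k)"
  thus "xi j x \<in> space N" using xi by (auto simp: measurable_def)
next
  fix B assume "B \<in> sets N"
  hence "xi j -` B \<inter> space M \<in> genF M N x0 xi k" unfolding genF_def using jk by blast
  thus "xi j -` B \<inter> space (nat_filtration M N x0 xi k) \<in> sets (nat_filtration M N x0 xi k)"
    unfolding sets_filt by auto
qed



lemma int_prod:
  fixes f g :: "'a \<Rightarrow> real"
  assumes [measurable]: "f \<in> borel_measurable M" "g \<in> borel_measurable M"
    and "integrable M (\<lambda>x. (f x)\<^sup>2)" "integrable M (\<lambda>x. (g x)\<^sup>2)"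
  shows "integrable M (\<lambda>x. f x * g x)"
proof (rule Bochner_Integration.integrable_bound[of _ "\<lambda>x. (f x)\<^sup>2 + (g x)\<^sup>2"])
  show "integrable M (\<lambda>x. (f x)\<^sup>2 + (g x)\<^sup>2)" using assms by simp
  show "(\<lambda>x. f x * g x) \<in> borel_measurable M" by measurable
  show "AE x in M. norm (f x * g x) \<le> norm ((f x)\<^sup>2 + (g x)\<^sup>2)"
  proof (rule AE_I2)
    fix x
    have "0 \<le> (\<bar>f x\<bar> - \<bar>g x\<bar>)\<^sup>2" by simp
    hence "2 * \<bar>f x\<bar> * \<bar>g x\<bar> \<le> (f x)\<^sup>2 + (g x)\<^sup>2" by (simp add: power2_eq_square algebra_simps)
    moreover have "\<bar>f x\<bar> * \<bar>g x\<bar> \<ge> 0" by simp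
    ultimately have "\<bar>f x\<bar> * \<bar>g x\<bar> \<le> (f x)\<^sup>2 + (g x)\<^sup>2" by linarith
    thus "norm (f x * g x) \<le> norm ((f x)\<^sup>2 + (g x)\<^sup>2)" by (simp add: abs_mult)
  qed
qed

lemma int_sq_add:
  fixes f g :: "'a \<Rightarrow> real"
  assumes [measurable]: "f \<in> borel_measurable M" "g \<in> borel_measurable M"
    and "integrable M (\<lambda>x. (f x)\<^sup>2)" "integrable M (\<lambda>x. (g x)\<^sup>2)"
  shows "integrable M (\<lambda>x. (f x + g x)\<^sup>2)"
proof -
  have "integrable M (\<lambda>x. (f x)\<^sup>2 + 2 * (f x * g x) + (g x)\<^sup>2)"
    using assms int_prod[OF assms] by simp
  thus ?thesis by (simp add: power2_eq_square algebra_simps)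
qed

locale mg = prob_space M for M :: "'a measure" +
  fixes Fk :: "nat \<Rightarrow> 'a measure" and d :: "nat \<Rightarrow> 'a \<Rightarrow> real"
  assumes sub: "\<And>k. subalgebra M (Fk k)"
    and mono: "\<And>j k. j \<le> k \<Longrightarrow> sets (Fk j) \<subseteq> sets (Fk k)"
    and dm: "\<And>k. d k \<in> borel_measurable (Fk (Suc k))"
    and d2: "\<And>k. integrable M (\<lambda>\<omega>. (d k \<omega>)\<^sup>2)"
    and orth: "\<And>k g. g \<in> borel_measurable (Fk k) \<Longrightarrow> integrable M (\<lambda>\<omega>. (g \<omega>)\<^sup>2) \<Longrightarrow> (\<integral>\<omega>. g \<omega> * d k \<omega> \<partial>M) = 0"
begin

lemma spaceF[simp]: "space (Fk k) = space M" using sub[of k] by (simp add: subalgebra_def)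

lemma meas_mono: "j \<le> k \<Longrightarrow> f \<in> borel_measurable (Fk j) \<Longrightarrow> f \<in> borel_measurable (Fk k)"
  using mono[of j k] unfolding measurable_def by auto

lemma meas_M: "f \<in> borel_measurable (Fk k) \<Longrightarrow> f \<in> borel_measurable M"
  by (rule measurable_from_subalg[OF sub])

lemma dM[measurable]: "d k \<in> borel_measurable M" by (rule meas_M[OF dm])

definition DD :: "nat \<Rightarrow> nat \<Rightarrow> 'a \<Rightarrow> real" where "DD m j \<omega> = (\<Sum>k\<in>{m..<j}. d k \<omega>)"

lemma DD_F: "DD m j \<in> borel_measurable (Fk j)"
  unfolding DD_def
proof (rule borel_measurable_sum)
  fix k assume "k \<in> {m..<j}"
  thus "d k \<in> borel_measurable (Fk j)" by (intro meas_mono[OF _ dm]) auto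
qed

lemma DD_M[measurable]: "DD m j \<in> borel_measurable M" by (rule meas_M[OF DD_F])

lemma DD_Suc: "m \<le> j \<Longrightarrow> DD m (Suc j) \<omega> = DD m j \<omega> + d j \<omega>"
  by (simp add: DD_def)

lemma DD_split: "m \<le> j \<Longrightarrow> j \<le> n \<Longrightarrow> DD m n \<omega> = DD m j \<omega> + DD j n \<omega>"
  unfolding DD_def by (metis sum.atLeastLessThan_concat)

lemma DD_sq_int: "integrable M (\<lambda>\<omega>. (DD m j \<omega>)\<^sup>2)"
proof (induction j)
  case 0 thus ?case by (simp add: DD_def)
next
  case (Suc j)
  show ?case
  proof (cases "m \<le> j")
    case True
    have "integrable M (\<lambda>\<omega>. (DD m j \<omega> + d j \<omega>)\<^sup>2)" by (rule int_sq_add) (use Suc d2 in auto)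
    thus ?thesis using True by (simp add: DD_Suc)
  next
    case False thus ?thesis by (simp add: DD_def)
  qed
qed

lemma energy: "m \<le> n \<Longrightarrow> (\<integral>\<omega>. (DD m n \<omega>)\<^sup>2 \<partial>M) = (\<Sum>k\<in>{m..<n}. \<integral>\<omega>. (d k \<omega>)\<^sup>2 \<partial>M)"
proof (induction n rule: dec_induct)
  case base thus ?case by (simp add: DD_def)
next
  case (step n)
  have o: "(\<integral>\<omega>. DD m n \<omega> * d n \<omega> \<partial>M) = 0" by (rule orth[OF DD_F DD_sq_int])
  have ip: "integrable M (\<lambda>\<omega>. DD m n \<omega> * d n \<omega>)" by (rule int_prod) (use DD_sq_int d2 in auto)
  have "(\<integral>\<omega>. (DD m (Suc n) \<omega>)\<^sup>2 \<partial>M) = (\<integral>\<omega>. (DD m n \<omega>)\<^sup>2 + 2 * (DD m n \<omega> * d n \<omega>) + (d n \<omega>)\<^sup>2 \<partial>M)"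
    using step(1) by (intro Bochner_Integration.integral_cong) (auto simp: DD_Suc power2_eq_square algebra_simps)
  also have "\<dots> = (\<integral>\<omega>. (DD m n \<omega>)\<^sup>2 \<partial>M) + 2 * (\<integral>\<omega>. DD m n \<omega> * d n \<omega> \<partial>M) + (\<integral>\<omega>. (d n \<omega>)\<^sup>2 \<partial>M)"
    using DD_sq_int ip d2 by simp
  finally show ?case using step o by simp
qed

lemma incr_ge:
  assumes A: "A \<in> sets (Fk j)" and mj: "m \<le> j" and jn: "j \<le> n"
  shows "(\<integral>\<omega>. indicator A \<omega> * (DD m j \<omega>)\<^sup>2 \<partial>M) \<le> (\<integral>\<omega>. indicator A \<omega> * (DD m n \<omega>)\<^sup>2 \<partial>M)"
proof -
  define g where "g \<omega> = indicator A \<omega> * DD m j \<omega>" for \<omega>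
  have AM: "A \<in> sets M" using A sub[of j] by (auto simp: subalgebra_def)
  have gF: "g \<in> borel_measurable (Fk j)" unfolding g_def using A DD_F by measurable
  have gM[measurable]: "g \<in> borel_measurable M" by (rule meas_M[OF gF])
  have g2: "integrable M (\<lambda>\<omega>. (g \<omega>)\<^sup>2)"
  proof (rule Bochner_Integration.integrable_bound[OF DD_sq_int[of m j]])
    show "(\<lambda>\<omega>. (g \<omega>)\<^sup>2) \<in> borel_measurable M" by measurable
    show "AE \<omega> in M. norm ((g \<omega>)\<^sup>2) \<le> norm ((DD m j \<omega>)\<^sup>2)"
      by (rule AE_I2) (simp add: g_def indicator_def power2_eq_square)
  qed
  have cross: "(\<integral>\<omega>. g \<omega> * DD j n \<omega> \<partial>M) = 0"
  proof -
    have "(\<integral>\<omega>. g \<omega> * DD j n \<omega> \<partial>M) = (\<integral>\<omega>. (\<Sum>k\<in>{j..<n}. g \<omega> * d k \<omega>) \<partial>M)"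
      by (simp add: DD_def sum_distrib_left)
    also have "\<dots> = (\<Sum>k\<in>{j..<n}. \<integral>\<omega>. g \<omega> * d k \<omega> \<partial>M)"
      by (rule Bochner_Integration.integral_sum) (rule int_prod, use g2 d2 in auto)
    also have "\<dots> = 0"
    proof (rule sum.neutral, rule ballI)
      fix k assume "k \<in> {j..<n}"
      hence "g \<in> borel_measurable (Fk k)" by (intro meas_mono[OF _ gF]) auto
      thus "(\<integral>\<omega>. g \<omega> * d k \<omega> \<partial>M) = 0" by (rule orth[OF _ g2])
    qed
    finally show ?thesis .
  qed
  have ig: "integrable M (\<lambda>\<omega>. g \<omega> * DD j n \<omega>)" by (rule int_prod) (use g2 DD_sq_int in auto)
  have i1: "integrable M (\<lambda>\<omega>. indicator A \<omega> * (DD m j \<omega>)\<^sup>2)"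
    using integrable_real_mult_indicator[OF AM DD_sq_int[of m j]] by (simp add: mult.commute)
  have i3: "integrable M (\<lambda>\<omega>. indicator A \<omega> * (DD j n \<omega>)\<^sup>2)"
    using integrable_real_mult_indicator[OF AM DD_sq_int[of j n]] by (simp add: mult.commute)
  have "(\<integral>\<omega>. indicator A \<omega> * (DD m n \<omega>)\<^sup>2 \<partial>M) =
      (\<integral>\<omega>. indicator A \<omega> * (DD m j \<omega>)\<^sup>2 + 2 * (g \<omega> * DD j n \<omega>) + indicator A \<omega> * (DD j n \<omega>)\<^sup>2 \<partial>M)"
    by (intro Bochner_Integration.integral_cong) (auto simp: DD_split[OF mj jn] g_def power2_eq_square algebra_simps indicator_def)
  also have "\<dots> = (\<integral>\<omega>. indicator A \<omega> * (DD m j \<omega>)\<^sup>2 \<partial>M) + 2 * (\<integral>\<omega>. g \<omega> * DD j n \<omega> \<partial>M)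
      + (\<integral>\<omega>. indicator A \<omega> * (DD j n \<omega>)\<^sup>2 \<partial>M)"
    using i1 ig i3 by simp
  finally have eq: "(\<integral>\<omega>. indicator A \<omega> * (DD m n \<omega>)\<^sup>2 \<partial>M) = (\<integral>\<omega>. indicator A \<omega> * (DD m j \<omega>)\<^sup>2 \<partial>M) + 2 * (\<integral>\<omega>. g \<omega> * DD j n \<omega> \<partial>M)
      + (\<integral>\<omega>. indicator A \<omega> * (DD j n \<omega>)\<^sup>2 \<partial>M)" .
  have "(\<integral>\<omega>. indicator A \<omega> * (DD j n \<omega>)\<^sup>2 \<partial>M) \<ge> 0" by (rule integral_nonneg_AE) (auto simp: indicator_def)
  thus ?thesis using eq cross by linarith
qed

end


context mg begin

lemma A_sets:
  assumes "m \<le> j"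
  shows "{\<omega>\<in>space M. e \<le> \<bar>DD m j \<omega>\<bar> \<and> (\<forall>i\<in>{m<..<j}. \<bar>DD m i \<omega>\<bar> < e)} \<in> sets (Fk j)"
proof -
  have [measurable]: "DD m j \<in> borel_measurable (Fk j)" by (rule DD_F)
  have s1: "{\<omega>\<in>space (Fk j). e \<le> \<bar>DD m j \<omega>\<bar>} \<in> sets (Fk j)" by measurable
  have s2: "{\<omega>\<in>space (Fk j). \<forall>i\<in>{m<..<j}. \<bar>DD m i \<omega>\<bar> < e} \<in> sets (Fk j)"
  proof (rule sets.sets_Collect_finite_All)
    fix i assume "i \<in> {m<..<j}"
    hence [measurable]: "DD m i \<in> borel_measurable (Fk j)" by (intro meas_mono[OF _ DD_F]) auto
    show "{\<omega>\<in>space (Fk j). \<bar>DD m i \<omega>\<bar> < e} \<in> sets (Fk j)" by measurable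
  qed simp
  have "{\<omega>\<in>space M. e \<le> \<bar>DD m j \<omega>\<bar> \<and> (\<forall>i\<in>{m<..<j}. \<bar>DD m i \<omega>\<bar> < e)} =
    {\<omega>\<in>space (Fk j). e \<le> \<bar>DD m j \<omega>\<bar>} \<inter> {\<omega>\<in>space (Fk j). \<forall>i\<in>{m<..<j}. \<bar>DD m i \<omega>\<bar> < e}" by auto
  thus ?thesis using s1 s2 by auto
qed

lemma maximal:
  assumes e: "e > 0" and mn: "m \<le> n"
  shows "e\<^sup>2 * prob {\<omega>\<in>space M. \<exists>j\<in>{m<..n}. e \<le> \<bar>DD m j \<omega>\<bar>} \<le> (\<Sum>k\<in>{m..<n}. \<integral>\<omega>. (d k \<omega>)\<^sup>2 \<partial>M)"
proof -
  define A where "A j = {\<omega>\<in>space M. e \<le> \<bar>DD m j \<omega>\<bar> \<and> (\<forall>i\<in>{m<..<j}. \<bar>DD m i \<omega>\<bar> < e)}" for j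
  define E where "E = {\<omega>\<in>space M. \<exists>j\<in>{m<..n}. e \<le> \<bar>DD m j \<omega>\<bar>}"
  define S where "S = {m<..n}"
  have AF: "j \<in> S \<Longrightarrow> A j \<in> sets (Fk j)" for j unfolding A_def S_def by (rule A_sets) auto
  have AM: "j \<in> S \<Longrightarrow> A j \<in> sets M" for j using AF sub[of j] by (auto simp: subalgebra_def)
  have EM: "E \<in> sets M" unfolding E_def by measurable
  have p1: "indicator E \<omega> * e\<^sup>2 \<le> (\<Sum>j\<in>S. e\<^sup>2 * indicator (A j) \<omega>)" if \<omega>: "\<omega> \<in> space M" for \<omega>
  proof (cases "\<omega> \<in> E")
    case False thus ?thesis by (simp add: sum_nonneg)
  next
    case True
    define J where "J = {j\<in>S. e \<le> \<bar>DD m j \<omega>\<bar>}"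
    have Jne: "J \<noteq> {}" "finite J" using True unfolding E_def J_def S_def by auto
    define j0 where "j0 = Min J"
    have j0J: "j0 \<in> J" unfolding j0_def using Jne by (rule Min_in[rotated])
    have "\<omega> \<in> A j0"
    proof -
      have "\<forall>i\<in>{m<..<j0}. \<bar>DD m i \<omega>\<bar> < e"
      proof (rule ballI, rule ccontr)
        fix i assume i: "i \<in> {m<..<j0}" and "\<not> \<bar>DD m i \<omega>\<bar> < e"
        hence "i \<in> J" using j0J unfolding J_def S_def by auto
        hence "j0 \<le> i" unfolding j0_def using Jne by simp
        thus False using i by simp
      qed
      thus ?thesis using j0J \<omega> unfolding A_def J_def by auto
    qed
    hence "e\<^sup>2 * indicator (A j0) \<omega> = e\<^sup>2" by simp
    moreover have "e\<^sup>2 * indicator (A j0) \<omega> \<le> (\<Sum>j\<in>S. e\<^sup>2 * indicator (A j) \<omega>)"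
      using j0J unfolding J_def S_def by (intro member_le_sum) auto
    moreover have "indicator E \<omega> * e\<^sup>2 = e\<^sup>2" using True by simp
    ultimately show ?thesis by linarith
  qed
  have p2: "(\<Sum>j\<in>S. indicator (A j) \<omega>) \<le> (1::real)" for \<omega>
  proof -
    define T where "T = {j\<in>S. \<omega> \<in> A j}"
    have fT: "finite T" unfolding T_def S_def by auto
    have "(\<Sum>j\<in>T. (1::real)) = (\<Sum>j\<in>S. if \<omega> \<in> A j then 1 else 0)"
      unfolding T_def by (rule sum.inter_filter) (simp add: S_def)
    hence "(\<Sum>j\<in>S. indicator (A j) \<omega>) = (\<Sum>j\<in>T. (1::real))" by (simp add: indicator_def of_bool_def)
    also have "\<dots> = real (card T)" by simp
    also have "card T \<le> Suc 0"
    proof (subst card_le_Suc0_iff_eq[OF fT], intro ballI)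
      fix a1 a2 assume a: "a1 \<in> T" "a2 \<in> T"
      show "a1 = a2"
      proof (rule ccontr)
        assume ne: "a1 \<noteq> a2"
        { fix a b assume ab: "a \<in> T" "b \<in> T" "a < b"
          hence "a \<in> {m<..<b}" unfolding T_def S_def by auto
          hence False using ab unfolding T_def A_def by fastforce }
        thus False using a ne by (metis linorder_neqE_nat)
      qed
    qed
    finally show ?thesis by simp
  qed
  have iA: "j \<in> S \<Longrightarrow> integrable M (\<lambda>\<omega>. indicator (A j) \<omega> * (DD m n \<omega>)\<^sup>2)" for j
    using integrable_real_mult_indicator[OF AM DD_sq_int[of m n]] by (simp add: mult.commute)
  have iE: "integrable M (\<lambda>\<omega>. indicator E \<omega> * e\<^sup>2)"
    using integrable_real_mult_indicator[OF EM integrable_const[of "e\<^sup>2"]] by (simp add: mult.commute)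
  have iA0: "j \<in> S \<Longrightarrow> integrable M (\<lambda>\<omega>. e\<^sup>2 * indicator (A j) \<omega>)" for j
    using integrable_real_mult_indicator[OF AM integrable_const[of "e\<^sup>2"]] by simp
  have "e\<^sup>2 * prob E = (\<integral>\<omega>. indicator E \<omega> * e\<^sup>2 \<partial>M)" using EM by simp
  also have "\<dots> \<le> (\<integral>\<omega>. (\<Sum>j\<in>S. e\<^sup>2 * indicator (A j) \<omega>) \<partial>M)"
    using p1 iE iA0 by (intro integral_mono) auto
  also have "\<dots> = (\<Sum>j\<in>S. \<integral>\<omega>. e\<^sup>2 * indicator (A j) \<omega> \<partial>M)"
    using iA0 by (rule Bochner_Integration.integral_sum)
  also have "\<dots> = (\<Sum>j\<in>S. e\<^sup>2 * prob (A j))"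
    using AM by (intro sum.cong) auto
  also have "\<dots> \<le> (\<Sum>j\<in>S. \<integral>\<omega>. indicator (A j) \<omega> * (DD m n \<omega>)\<^sup>2 \<partial>M)"
  proof (rule sum_mono)
    fix j assume jS: "j \<in> S"
    have "e\<^sup>2 * prob (A j) = (\<integral>\<omega>. indicator (A j) \<omega> * e\<^sup>2 \<partial>M)" using AM[OF jS] by simp
    also have "\<dots> \<le> (\<integral>\<omega>. indicator (A j) \<omega> * (DD m j \<omega>)\<^sup>2 \<partial>M)"
    proof (rule integral_mono)
      show "integrable M (\<lambda>\<omega>. indicator (A j) \<omega> * e\<^sup>2)" using iA0[OF jS] by (simp add: mult.commute)
      show "integrable M (\<lambda>\<omega>. indicator (A j) \<omega> * (DD m j \<omega>)\<^sup>2)"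
        using integrable_real_mult_indicator[OF AM[OF jS] DD_sq_int[of m j]] by (simp add: mult.commute)
      fix \<omega> assume "\<omega> \<in> space M"
      show "indicator (A j) \<omega> * e\<^sup>2 \<le> indicator (A j) \<omega> * (DD m j \<omega>)\<^sup>2"
      proof (cases "\<omega> \<in> A j")
        case True
        hence "e \<le> \<bar>DD m j \<omega>\<bar>" unfolding A_def by auto
        hence "e\<^sup>2 \<le> (DD m j \<omega>)\<^sup>2" using e by (metis abs_of_pos power2_abs power_mono less_imp_le)
        thus ?thesis using True by simp
      qed simp
    qed
    also have "\<dots> \<le> (\<integral>\<omega>. indicator (A j) \<omega> * (DD m n \<omega>)\<^sup>2 \<partial>M)"
      using jS by (intro incr_ge AF) (auto simp: S_def)
    finally show "e\<^sup>2 * prob (A j) \<le> (\<integral>\<omega>. indicator (A j) \<omega> * (DD m n \<omega>)\<^sup>2 \<partial>M)" .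
  qed
  also have "\<dots> = (\<integral>\<omega>. (\<Sum>j\<in>S. indicator (A j) \<omega>) * (DD m n \<omega>)\<^sup>2 \<partial>M)"
    unfolding sum_distrib_right using iA by (rule Bochner_Integration.integral_sum[symmetric])
  also have "\<dots> \<le> (\<integral>\<omega>. (DD m n \<omega>)\<^sup>2 \<partial>M)"
  proof (rule integral_mono)
    show "integrable M (\<lambda>\<omega>. (\<Sum>j\<in>S. indicator (A j) \<omega>) * (DD m n \<omega>)\<^sup>2)"
      using iA by (auto simp: sum_distrib_right)
    show "integrable M (\<lambda>\<omega>. (DD m n \<omega>)\<^sup>2)" by (rule DD_sq_int)
    fix \<omega> show "(\<Sum>j\<in>S. indicator (A j) \<omega>) * (DD m n \<omega>)\<^sup>2 \<le> (DD m n \<omega>)\<^sup>2"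
      using p2[of \<omega>] by (simp add: mult_left_le_one_le sum_nonneg)
  qed
  also have "\<dots> = (\<Sum>k\<in>{m..<n}. \<integral>\<omega>. (d k \<omega>)\<^sup>2 \<partial>M)" by (rule energy[OF mn])
  finally show ?thesis unfolding E_def .
qed

end


context mg begin

lemma DD_eq: "m \<le> j \<Longrightarrow> DD m j \<omega> = (\<Sum>k<j. d k \<omega>) - (\<Sum>k<m. d k \<omega>)"
  unfolding DD_def atLeast0LessThan[symmetric] by (simp add: sum.atLeastLessThan_concat[symmetric, of 0 m j])

lemma tail_bound:
  assumes sm: "summable (\<lambda>k. \<integral>\<omega>. (d k \<omega>)\<^sup>2 \<partial>M)" and e: "e > 0"
  shows "e\<^sup>2 * prob {\<omega>\<in>space M. \<exists>j. m < j \<and> e \<le> \<bar>DD m j \<omega>\<bar>} \<le> (\<Sum>k. \<integral>\<omega>. (d (k + m) \<omega>)\<^sup>2 \<partial>M)"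
proof -
  define B where "B n = {\<omega>\<in>space M. \<exists>j\<in>{m<..m+n}. e \<le> \<bar>DD m j \<omega>\<bar>}" for n
  have "B n \<in> sets M" for n unfolding B_def by measurable
  hence Bs: "range B \<subseteq> sets M" by auto
  have Binc: "incseq B"
  proof (rule incseq_SucI, rule subsetI)
    fix n \<omega> assume "\<omega> \<in> B n"
    then obtain j where j: "\<omega> \<in> space M" "j \<in> {m<..m+n}" "e \<le> \<bar>DD m j \<omega>\<bar>" unfolding B_def by auto
    show "\<omega> \<in> B (Suc n)" unfolding B_def using j by (intro CollectI conjI bexI[of _ j]) auto
  qed
  have Bun: "(\<Union>n. B n) = {\<omega>\<in>space M. \<exists>j. m < j \<and> e \<le> \<bar>DD m j \<omega>\<bar>}"
  proof (rule set_eqI, rule iffI)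
    fix \<omega> assume "\<omega> \<in> (\<Union>n. B n)"
    then obtain n j where j: "\<omega> \<in> space M" "j \<in> {m<..m+n}" "e \<le> \<bar>DD m j \<omega>\<bar>" unfolding B_def by auto
    thus "\<omega> \<in> {\<omega>\<in>space M. \<exists>j. m < j \<and> e \<le> \<bar>DD m j \<omega>\<bar>}" by auto
  next
    fix \<omega> assume "\<omega> \<in> {\<omega>\<in>space M. \<exists>j. m < j \<and> e \<le> \<bar>DD m j \<omega>\<bar>}"
    then obtain j where j: "\<omega> \<in> space M" "m < j" "e \<le> \<bar>DD m j \<omega>\<bar>" by auto
    hence "\<omega> \<in> B (j - m)" unfolding B_def by (intro CollectI conjI bexI[of _ j]) auto
    thus "\<omega> \<in> (\<Union>n. B n)" by blast
  qed
  have lim: "(\<lambda>n. e\<^sup>2 * prob (B n)) \<longlonglongrightarrow> e\<^sup>2 * prob (\<Union>n. B n)"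
    by (intro tendsto_mult tendsto_const finite_Lim_measure_incseq Bs Binc)
  have nn: "\<And>k. 0 \<le> (\<integral>\<omega>. (d k \<omega>)\<^sup>2 \<partial>M)" by (rule integral_nonneg_AE) simp
  have bound: "e\<^sup>2 * prob (B n) \<le> (\<Sum>k. \<integral>\<omega>. (d (k + m) \<omega>)\<^sup>2 \<partial>M)" for n
  proof -
    have "e\<^sup>2 * prob (B n) \<le> (\<Sum>k\<in>{m..<m+n}. \<integral>\<omega>. (d k \<omega>)\<^sup>2 \<partial>M)"
      unfolding B_def by (rule maximal[OF e]) simp
    also have "\<dots> = (\<Sum>i<n. \<integral>\<omega>. (d (i + m) \<omega>)\<^sup>2 \<partial>M)"
      using sum.shift_bounds_nat_ivl[of "\<lambda>k. \<integral>\<omega>. (d k \<omega>)\<^sup>2 \<partial>M" 0 m n] by (simp add: add.commute atLeast0LessThan)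
    also have "\<dots> \<le> (\<Sum>k. \<integral>\<omega>. (d (k + m) \<omega>)\<^sup>2 \<partial>M)"
      by (rule sum_le_suminf) (auto intro: summable_ignore_initial_segment[OF sm] nn)
    finally show ?thesis .
  qed
  have "e\<^sup>2 * prob (\<Union>n. B n) \<le> (\<Sum>k. \<integral>\<omega>. (d (k + m) \<omega>)\<^sup>2 \<partial>M)"
    by (rule LIMSEQ_le_const2[OF lim]) (use bound in auto)
  thus ?thesis unfolding Bun .
qed

lemma mg_conv:
  assumes sm: "summable (\<lambda>k. \<integral>\<omega>. (d k \<omega>)\<^sup>2 \<partial>M)"
  shows "AE \<omega> in M. convergent (\<lambda>n. \<Sum>k<n. d k \<omega>)"
proof -
  define Bad where "Bad r = {\<omega>\<in>space M. \<forall>m. \<exists>j. m < j \<and> 1 / real (Suc r) \<le> \<bar>DD m j \<omega>\<bar>}" for r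
  have Bads: "Bad r \<in> sets M" for r unfolding Bad_def by measurable
  have Bad0: "prob (Bad r) = 0" for r
  proof -
    define e where "e = 1 / real (Suc r)"
    have e: "e > 0" by (simp add: e_def)
    have le: "e\<^sup>2 * prob (Bad r) \<le> \<delta>" if \<delta>: "\<delta> > 0" for \<delta>
    proof -
      obtain N where N: "\<forall>n\<ge>N. norm (\<Sum>i. \<integral>\<omega>. (d (i + n) \<omega>)\<^sup>2 \<partial>M) < \<delta>"
        using suminf_exist_split[OF \<delta> sm] by blast
      have sub: "Bad r \<subseteq> {\<omega>\<in>space M. \<exists>j. N < j \<and> e \<le> \<bar>DD N j \<omega>\<bar>}" unfolding Bad_def e_def by auto
      have "prob (Bad r) \<le> prob {\<omega>\<in>space M. \<exists>j. N < j \<and> e \<le> \<bar>DD N j \<omega>\<bar>}"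
        by (rule finite_measure_mono[OF sub]) measurable
      hence "e\<^sup>2 * prob (Bad r) \<le> e\<^sup>2 * prob {\<omega>\<in>space M. \<exists>j. N < j \<and> e \<le> \<bar>DD N j \<omega>\<bar>}"
        by (simp add: mult_left_mono)
      also have "\<dots> \<le> (\<Sum>k. \<integral>\<omega>. (d (k + N) \<omega>)\<^sup>2 \<partial>M)" by (rule tail_bound[OF sm e])
      also have "\<dots> < \<delta>" using N by auto
      finally show ?thesis by simp
    qed
    have "e\<^sup>2 * prob (Bad r) \<le> 0" by (rule field_le_epsilon) (use le in auto)
    moreover have "e\<^sup>2 > 0" using e by simp
    ultimately show ?thesis using measure_nonneg[of M "Bad r"] by (simp add: mult_le_0_iff)
  qed
  have "AE \<omega> in M. \<omega> \<notin> Bad r" for r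
  proof (rule AE_I')
    show "Bad r \<in> null_sets M" using Bads Bad0 by (simp add: null_sets_def emeasure_eq_measure)
  qed auto
  hence "AE \<omega> in M. \<forall>r. \<omega> \<notin> Bad r" by (simp add: AE_all_countable)
  thus ?thesis
  proof (rule AE_mp)
  show "AE \<omega> in M. (\<forall>r. \<omega> \<notin> Bad r) \<longrightarrow> convergent (\<lambda>n. \<Sum>k<n. d k \<omega>)"
  proof (rule AE_I2, rule impI)
    fix \<omega> assume \<omega>: "\<omega> \<in> space M" and nb: "\<forall>r. \<omega> \<notin> Bad r"
    define S where "S n = (\<Sum>k<n. d k \<omega>)" for n
    have good: "\<exists>m. \<forall>j\<ge>m. \<bar>S j - S m\<bar> < 1 / real (Suc r)" for r
    proof -
      obtain m where m: "\<forall>j. m < j \<longrightarrow> \<bar>DD m j \<omega>\<bar> < 1 / real (Suc r)"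
        using nb[rule_format, of r] \<omega> unfolding Bad_def by (auto simp: not_le)
      show ?thesis
      proof (intro exI allI impI)
        fix j assume "m \<le> j"
        show "\<bar>S j - S m\<bar> < 1 / real (Suc r)"
        proof (cases "j = m")
          case True thus ?thesis by simp
        next
          case False
          hence "m < j" using \<open>m \<le> j\<close> by simp
          thus ?thesis using m DD_eq[of m j \<omega>] unfolding S_def by auto
        qed
      qed
    qed
    have "Cauchy S"
    proof (rule CauchyI)
      fix e :: real assume e: "0 < e"
      obtain r where r: "inverse (real (Suc r)) < e / 2" using reals_Archimedean[of "e / 2"] e by auto
      obtain m where m: "\<forall>j\<ge>m. \<bar>S j - S m\<bar> < 1 / real (Suc r)" using good by blast
      show "\<exists>M. \<forall>a\<ge>M. \<forall>b\<ge>M. norm (S a - S b) < e"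
      proof (intro exI allI impI)
        fix a b assume "m \<le> a" "m \<le> b"
        hence "\<bar>S a - S m\<bar> < e / 2" "\<bar>S b - S m\<bar> < e / 2" using m r by (auto simp: inverse_eq_divide)
        moreover have "\<bar>S a - S b\<bar> \<le> \<bar>S a - S m\<bar> + \<bar>S m - S b\<bar>"
          using abs_triangle_ineq[of "S a - S m" "S m - S b"] by simp
        moreover have "\<bar>S m - S b\<bar> = \<bar>S b - S m\<bar>" by (rule abs_minus_commute)
        ultimately show "norm (S a - S b) < e" unfolding real_norm_def by linarith
      qed
    qed
    thus "convergent (\<lambda>n. \<Sum>k<n. d k \<omega>)" using Cauchy_convergent_iff unfolding S_def by blast
  qed
  qed
qed

end


lemma ae_summable:
  fixes h :: "nat \<Rightarrow> 'a \<Rightarrow> real"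
  assumes hm: "\<And>k. h k \<in> borel_measurable M" and h0: "\<And>k \<omega>. h k \<omega> \<ge> 0"
    and hi: "\<And>k. integrable M (h k)" and sm: "summable (\<lambda>k. \<integral>\<omega>. h k \<omega> \<partial>M)"
  shows "AE \<omega> in M. summable (\<lambda>k. h k \<omega>)"
proof -
  have "(\<integral>\<^sup>+ \<omega>. (\<Sum>k. ennreal (h k \<omega>)) \<partial>M) = (\<Sum>k. \<integral>\<^sup>+ \<omega>. ennreal (h k \<omega>) \<partial>M)"
    by (rule nn_integral_suminf) (use hm in measurable)
  also have "\<dots> = (\<Sum>k. ennreal (\<integral>\<omega>. h k \<omega> \<partial>M))"
    using hi h0 by (subst nn_integral_eq_integral) auto
  also have "\<dots> = ennreal (\<Sum>k. \<integral>\<omega>. h k \<omega> \<partial>M)"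
    by (rule suminf_ennreal_eq) (auto intro: integral_nonneg_AE h0 summable_sums[OF sm])
  finally have "(\<integral>\<^sup>+ \<omega>. (\<Sum>k. ennreal (h k \<omega>)) \<partial>M) \<noteq> \<infinity>" by simp
  hence "AE \<omega> in M. (\<Sum>k. ennreal (h k \<omega>)) \<noteq> \<infinity>"
    by (intro nn_integral_PInf_AE) (use hm in measurable)
  thus ?thesis by eventually_elim (rule summable_suminf_not_top[OF h0], simp)
qed



theorem proposition7:
  fixes M :: "'a measure" and N :: "'b measure"
    and F :: "'v::euclidean_space \<Rightarrow> 'b \<Rightarrow> real" and G :: "'v \<Rightarrow> 'b \<Rightarrow> 'v"
    and f :: "'v \<Rightarrow> real" and gradf :: "'v \<Rightarrow> 'v"
    and Dom X :: "'v set"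
    and xi :: "nat \<Rightarrow> 'a \<Rightarrow> 'b" and x0 :: "'a \<Rightarrow> 'v" and x :: "nat \<Rightarrow> 'a \<Rightarrow> 'v"
    and w :: "nat \<Rightarrow> 'a \<Rightarrow> 'v"
    and L eta nu gamma0 theta :: real
  assumes M: "prob_space M" and N: "prob_space N"
    and Dom: "open Dom" and XD: "X \<subseteq> Dom" and Xne: "X \<noteq> {}" and Xclosed: "closed X"
    and Xconvex: "convex X" and Xcompact: "compact X"
    and Fconv: "\<forall>z\<in>space N. convex_on Dom (\<lambda>y. F y z)"
    and Fint: "\<forall>y\<in>Dom. integrable N (F y)"
    and fdef: "\<forall>y\<in>Dom. f y = (\<integral>z. F y z \<partial>N)"
    and Fgrad: "\<forall>y\<in>X. \<forall>z\<in>space N. ((\<lambda>u. F u z) has_derivative (\<lambda>h. G y z \<bullet> h)) (at y)"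
    and fgrad: "\<forall>y\<in>X. (f has_derivative (\<lambda>h. gradf y \<bullet> h)) (at y)"
    and Lip: "\<forall>y\<in>X. \<forall>u\<in>X. norm (gradf y - gradf u) \<le> L * norm (y - u)"
    and eta: "eta > 0" and sconv: "strongly_convex_on X eta f" and Leta: "L > eta"
    and xi_meas: "\<forall>k. xi k \<in> measurable M N"
    and x0_meas: "x0 \<in> borel_measurable M" and x0X: "\<forall>\<omega>\<in>space M. x0 \<omega> \<in> X"
    and x_0: "\<forall>\<omega>. x 0 \<omega> = x0 \<omega>"
    and wdef: "\<forall>k \<omega>. w k \<omega> = G (x k \<omega>) (xi k \<omega>) - gradf (x k \<omega>)"
    and x_Suc: "\<forall>k \<omega>. x (Suc k) \<omega> =
       closest_point X (x k \<omega> - casc_step eta L gamma0 theta nu (diameter X) k *\<^sub>R (gradf (x k \<omega>) + w k \<omega>))"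
    and w_int: "\<forall>k. integrable M (w k)"
    and w_unbiased: "\<forall>k. \<forall>i\<in>Basis.
       AE \<omega> in M. real_cond_exp M (nat_filtration M N x0 xi k) (\<lambda>\<omega>. w k \<omega> \<bullet> i) \<omega> = 0"
    and w2_int: "\<forall>k. integrable M (\<lambda>\<omega>. (norm (w k \<omega>))\<^sup>2)"
    and w_var: "\<forall>k. AE \<omega> in M.
       real_cond_exp M (nat_filtration M N x0 xi k) (\<lambda>\<omega>. (norm (w k \<omega>))\<^sup>2) \<omega> \<le> nu\<^sup>2"
    and nu: "nu > 0"
    and gamma0: "0 < gamma0" "gamma0 < 2 / L"
    and theta: "0 < theta" "theta < 1"
    and gamma0_D: "(diameter X)\<^sup>2 > gamma0\<^sup>2 * nu\<^sup>2 / (1 - qfun eta L gamma0)"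
  shows "\<exists>xs. xs \<in> X \<and> (\<forall>y\<in>X. f xs \<le> f y) \<and>
              (\<forall>y\<in>X. (\<forall>u\<in>X. f y \<le> f u) \<longrightarrow> y = xs) \<and>
              (AE \<omega> in M. (\<lambda>k. x k \<omega>) \<longlonglongrightarrow> xs)"
proof -
  interpret P: prob_space M by (rule M)
  interpret C: casc eta L gamma0 theta nu "diameter X"
    by unfold_locales (use eta Leta gamma0 theta nu gamma0_D in auto)
  define Dm where "Dm = diameter X"
  define ga where "ga k = casc_step eta L gamma0 theta nu (diameter X) k" for k
  have ga_pos: "ga k > 0" for k unfolding ga_def by (rule C.step_pos)
  have ga_le: "ga k \<le> gamma0" for k unfolding ga_def by (rule C.step_le)
  have ga2: "summable (\<lambda>k. (ga k)\<^sup>2)" unfolding ga_def by (rule C.step_sq_summable)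
  have gans: "\<not> summable ga" unfolding ga_def[abs_def] by (rule C.step_not_summable)
  have L0: "L > 0" using eta Leta by simp
  have bX: "bounded X" using Xcompact by (rule compact_imp_bounded)
  have distX: "norm (y - z) \<le> Dm" if "y \<in> X" "z \<in> X" for y z
    using diameter_bounded_bound[OF bX that] by (simp add: Dm_def dist_norm)
  have Dm0: "Dm \<ge> 0" using distX Xne by (metis all_not_in_conv norm_ge_zero order_trans)
  have gcont: "continuous_on X gradf"
    unfolding continuous_on_iff
  proof (intro ballI allI impI)
    fix y e assume y: "y \<in> X" and e: "(0::real) < e"
    show "\<exists>d>0. \<forall>y'\<in>X. dist y' y < d \<longrightarrow> dist (gradf y') (gradf y) < e"
    proof (intro exI[of _ "e / L"] conjI ballI impI)
      show "e / L > 0" using e L0 by simp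
      fix y' assume y': "y' \<in> X" and dd: "dist y' y < e / L"
      have "dist (gradf y') (gradf y) \<le> L * dist y' y" using Lip y y' by (simp add: dist_norm)
      also have "\<dots> < L * (e / L)" using mult_strict_left_mono[OF dd L0] .
      finally show "dist (gradf y') (gradf y) < e" using L0 by simp
    qed
  qed
  have fcont: "continuous_on X f"
    by (rule continuous_at_imp_continuous_on) (use fgrad has_derivative_continuous in blast)
  obtain xs where xs: "xs \<in> X" "\<forall>y\<in>X. f xs \<le> f y"
    using continuous_attains_inf[OF Xcompact Xne fcont] by blast
  have opt: "\<forall>y\<in>X. gradf xs \<bullet> (y - xs) \<ge> 0"
    using opt_cond[OF Xconvex xs(1) _ xs(2)] fgrad xs(1) by blast
  have smono: "(gradf y - gradf xs) \<bullet> (y - xs) \<ge> eta * (norm (y - xs))\<^sup>2" if y: "y \<in> X" for y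
  proof -
    have a: "gradf y \<bullet> (xs - y) \<le> f xs - f y - eta / 2 * (norm (xs - y))\<^sup>2"
      by (rule sc_grad[OF sconv y xs(1)]) (use fgrad y in blast)
    have b: "gradf xs \<bullet> (y - xs) \<le> f y - f xs - eta / 2 * (norm (y - xs))\<^sup>2"
      by (rule sc_grad[OF sconv xs(1) y]) (use fgrad xs(1) in blast)
    have "norm (xs - y) = norm (y - xs)" by (rule norm_minus_commute)
    moreover have "gradf y \<bullet> (xs - y) = - (gradf y \<bullet> (y - xs))" by (simp add: inner_diff_right)
    ultimately show ?thesis using a b by (simp add: inner_diff_left algebra_simps)
  qed
  have uniq: "\<forall>y\<in>X. (\<forall>u\<in>X. f y \<le> f u) \<longrightarrow> y = xs"
  proof (intro ballI impI)
    fix y assume y: "y \<in> X" and ym: "\<forall>u\<in>X. f y \<le> f u"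
    have b: "gradf xs \<bullet> (y - xs) \<le> f y - f xs - eta / 2 * (norm (y - xs))\<^sup>2"
      by (rule sc_grad[OF sconv xs(1) y]) (use fgrad xs(1) in blast)
    have "f y \<le> f xs" using ym xs(1) by blast
    hence "eta / 2 * (norm (y - xs))\<^sup>2 \<le> 0" using b opt y by fastforce
    hence "(norm (y - xs))\<^sup>2 \<le> 0" using eta by (simp add: mult_le_0_iff)
    thus "y = xs" by simp
  qed
  have fp: "closest_point X (xs - ga k *\<^sub>R gradf xs) = xs" for k
    by (rule fixed_point[OF Xconvex Xclosed xs(1) opt]) (use ga_pos[of k] in simp)
  have xX: "x k \<omega> \<in> X" if "\<omega> \<in> space M" for k \<omega>
  proof (cases k)
    case 0 thus ?thesis using x_0 x0X that by simp
  next
    case (Suc j) thus ?thesis using x_Suc closest_point_in_set[OF Xclosed Xne] by simp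
  qed
  define Fk where "Fk k = nat_filtration M N x0 xi k" for k
  have sub: "subalgebra M (Fk k)" for k unfolding Fk_def by (rule filt_sub[OF x0_meas]) (use xi_meas in blast)
  have Fcont: "continuous_on Dom (\<lambda>y. F y z)" if "z \<in> space N" for z
    by (rule convex_on_continuous[OF Dom]) (use Fconv that in blast)
  have Fmeas: "F y \<in> borel_measurable N" if "y \<in> Dom" for y using Fint that by blast
  have xm: "x k \<in> borel_measurable (Fk k)" for k
  proof (induction k)
    case 0
    have "x 0 = x0" using x_0 by auto
    thus ?case unfolding Fk_def using x0_filt[OF x0_meas] by simp
  next
    case (Suc k)
    have xk: "x k \<in> borel_measurable (Fk (Suc k))"
      using Suc unfolding Fk_def by (rule filt_meas_from_mono[rotated]) simp
    have xik: "xi k \<in> measurable (Fk (Suc k)) N" unfolding Fk_def by (rule xi_filt) (use xi_meas in auto)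
    have Gm: "(\<lambda>\<omega>. G (x k \<omega>) (xi k \<omega>)) \<in> borel_measurable (Fk (Suc k))"
    proof (rule grad_meas[OF Dom XD Fcont Fmeas _ xk _ xik])
      show "\<And>y z. y \<in> X \<Longrightarrow> z \<in> space N \<Longrightarrow> ((\<lambda>u. F u z) has_derivative (\<lambda>h. G y z \<bullet> h)) (at y)"
        using Fgrad by blast
      show "\<And>\<omega>. \<omega> \<in> space (Fk (Suc k)) \<Longrightarrow> x k \<omega> \<in> X" using xX unfolding Fk_def by simp
    qed
    have eq: "x (Suc k) = (\<lambda>\<omega>. closest_point X (x k \<omega> - ga k *\<^sub>R G (x k \<omega>) (xi k \<omega>)))"
      using x_Suc wdef unfolding ga_def Dm_def by (auto simp: fun_eq_iff)
    have [measurable]: "(\<lambda>\<omega>. x k \<omega> - ga k *\<^sub>R G (x k \<omega>) (xi k \<omega>)) \<in> borel_measurable (Fk (Suc k))"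
      using xk Gm by measurable
    show ?case unfolding eq
      by (rule borel_measurable_continuous_on[OF continuous_on_closest_point[OF Xconvex Xclosed Xne]]) measurable
  qed
  have gxm: "(\<lambda>\<omega>. gradf (x k \<omega>)) \<in> borel_measurable (Fk k)" for k
  proof -
    have "x k \<in> measurable (Fk k) (restrict_space borel X)"
      by (rule measurable_restrict_space2) (use xm xX sub in \<open>auto simp: Fk_def\<close>)
    from measurable_comp[OF this borel_measurable_continuous_on_restrict[OF gcont]]
    show ?thesis by (simp add: comp_def)
  qed
  have spF[simp]: "space (Fk k) = space M" for k unfolding Fk_def by simp
  have monoF: "j \<le> k \<Longrightarrow> sets (Fk j) \<subseteq> sets (Fk k)" for j k unfolding Fk_def by (rule filt_mono)
  have measM: "f \<in> borel_measurable (Fk k) \<Longrightarrow> f \<in> borel_measurable M" for f k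
    by (rule measurable_from_subalg[OF sub])
  have mono_meas: "j \<le> k \<Longrightarrow> f \<in> borel_measurable (Fk j) \<Longrightarrow> f \<in> borel_measurable (Fk k)" for f j k
    using monoF[of j k] unfolding measurable_def by auto
  have wm: "w k \<in> borel_measurable (Fk (Suc k))" for k
  proof -
    have xk: "x k \<in> borel_measurable (Fk (Suc k))" by (rule mono_meas[OF _ xm]) simp
    have xik: "xi k \<in> measurable (Fk (Suc k)) N" unfolding Fk_def by (rule xi_filt) (use xi_meas in auto)
    have Gm: "(\<lambda>\<omega>. G (x k \<omega>) (xi k \<omega>)) \<in> borel_measurable (Fk (Suc k))"
    proof (rule grad_meas[OF Dom XD Fcont Fmeas _ xk _ xik])
      show "\<And>y z. y \<in> X \<Longrightarrow> z \<in> space N \<Longrightarrow> ((\<lambda>u. F u z) has_derivative (\<lambda>h. G y z \<bullet> h)) (at y)"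
        using Fgrad by blast
      show "\<And>\<omega>. \<omega> \<in> space (Fk (Suc k)) \<Longrightarrow> x k \<omega> \<in> X" using xX by simp
    qed
    have gk: "(\<lambda>\<omega>. gradf (x k \<omega>)) \<in> borel_measurable (Fk (Suc k))" by (rule mono_meas[OF _ gxm]) simp
    have "w k = (\<lambda>\<omega>. G (x k \<omega>) (xi k \<omega>) - gradf (x k \<omega>))" using wdef by auto
    thus ?thesis using Gm gk by simp
  qed
  have wM[measurable]: "w k \<in> borel_measurable M" for k by (rule measM[OF wm])
  define u where "u k \<omega> = x k \<omega> - xs - ga k *\<^sub>R (gradf (x k \<omega>) - gradf xs)" for k \<omega>
  have um: "u k \<in> borel_measurable (Fk k)" for k
  proof -
    have [measurable]: "x k \<in> borel_measurable (Fk k)" "(\<lambda>\<omega>. gradf (x k \<omega>)) \<in> borel_measurable (Fk k)"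
      using xm gxm by auto
    show ?thesis unfolding u_def by measurable
  qed
  have uM[measurable]: "u k \<in> borel_measurable M" for k by (rule measM[OF um])
  define Cu where "Cu = Dm + gamma0 * L * Dm"
  have Cu0: "Cu \<ge> 0" unfolding Cu_def using Dm0 gamma0 L0 by simp
  have ub: "norm (u k \<omega>) \<le> Cu" if \<omega>: "\<omega> \<in> space M" for k \<omega>
  proof -
    have "norm (u k \<omega>) \<le> norm (x k \<omega> - xs) + norm (ga k *\<^sub>R (gradf (x k \<omega>) - gradf xs))"
      unfolding u_def by (rule norm_triangle_ineq4)
    also have "norm (ga k *\<^sub>R (gradf (x k \<omega>) - gradf xs)) = ga k * norm (gradf (x k \<omega>) - gradf xs)"
      using ga_pos[of k] by simp
    also have "\<dots> \<le> gamma0 * (L * Dm)"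
    proof (rule mult_mono)
      show "norm (gradf (x k \<omega>) - gradf xs) \<le> L * Dm"
        using Lip xX[OF \<omega>] xs(1) distX[OF xX[OF \<omega>] xs(1)] L0
        by (meson order_trans mult_left_mono less_imp_le)
    qed (use ga_le ga_pos[of k] L0 Dm0 gamma0 in auto)
    finally show ?thesis using distX[OF xX[OF \<omega>, of k] xs(1)] unfolding Cu_def by (simp add: mult.assoc)
  qed
  define d where "d k \<omega> = ga k * (w k \<omega> \<bullet> u k \<omega>)" for k \<omega>
  have Ew2: "(\<integral>\<omega>. (norm (w k \<omega>))\<^sup>2 \<partial>M) \<le> nu\<^sup>2" for k
  proof -
    have fms: "finite_measure_subalgebra M (Fk k)"
      by (intro finite_measure_subalgebra.intro finite_measure_subalgebra_axioms.intro sub) unfold_locales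
    interpret SF: sigma_finite_subalgebra M "Fk k" by (rule finite_measure_subalgebra_is_sigma_finite[OF fms])
    have "(\<integral>\<omega>. (norm (w k \<omega>))\<^sup>2 \<partial>M) = (\<integral>\<omega>. real_cond_exp M (Fk k) (\<lambda>\<omega>. (norm (w k \<omega>))\<^sup>2) \<omega> \<partial>M)"
      using SF.real_cond_exp_int(2)[OF w2_int[rule_format, of k]] by simp
    also have "\<dots> \<le> (\<integral>\<omega>. nu\<^sup>2 \<partial>M)"
      by (rule integral_mono_AE) (use SF.real_cond_exp_int(1)[OF w2_int[rule_format, of k]] w_var in \<open>auto simp: Fk_def\<close>)
    also have "\<dots> = nu\<^sup>2" by (simp add: P.prob_space)
    finally show ?thesis .
  qed
  have dM[measurable]: "d k \<in> borel_measurable M" for k unfolding d_def by measurable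
  have dsq: "(d k \<omega>)\<^sup>2 \<le> (ga k)\<^sup>2 * Cu\<^sup>2 * (norm (w k \<omega>))\<^sup>2" if \<omega>: "\<omega> \<in> space M" for k \<omega>
  proof -
    have "\<bar>w k \<omega> \<bullet> u k \<omega>\<bar> \<le> norm (w k \<omega>) * Cu"
      using Cauchy_Schwarz_ineq2[of "w k \<omega>" "u k \<omega>"] ub[OF \<omega>, of k]
      by (meson order_trans mult_left_mono norm_ge_zero)
    hence "(w k \<omega> \<bullet> u k \<omega>)\<^sup>2 \<le> (norm (w k \<omega>) * Cu)\<^sup>2"
      by (metis abs_ge_zero order_trans power2_abs power_mono)
    hence "(ga k)\<^sup>2 * (w k \<omega> \<bullet> u k \<omega>)\<^sup>2 \<le> (ga k)\<^sup>2 * (norm (w k \<omega>) * Cu)\<^sup>2"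
      by (rule mult_left_mono) simp
    thus ?thesis unfolding d_def by (simp add: power_mult_distrib algebra_simps)
  qed
  have d2: "integrable M (\<lambda>\<omega>. (d k \<omega>)\<^sup>2)" for k
  proof (rule Bochner_Integration.integrable_bound[of _ "\<lambda>\<omega>. (ga k)\<^sup>2 * Cu\<^sup>2 * (norm (w k \<omega>))\<^sup>2"])
    show "integrable M (\<lambda>\<omega>. (ga k)\<^sup>2 * Cu\<^sup>2 * (norm (w k \<omega>))\<^sup>2)" using w2_int by simp
    show "(\<lambda>\<omega>. (d k \<omega>)\<^sup>2) \<in> borel_measurable M" by measurable
    show "AE \<omega> in M. norm ((d k \<omega>)\<^sup>2) \<le> norm ((ga k)\<^sup>2 * Cu\<^sup>2 * (norm (w k \<omega>))\<^sup>2)"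
      by (rule AE_I2) (use dsq in auto)
  qed
  have orth: "(\<integral>\<omega>. g \<omega> * d k \<omega> \<partial>M) = 0"
    if gm: "g \<in> borel_measurable (Fk k)" and g2: "integrable M (\<lambda>\<omega>. (g \<omega>)\<^sup>2)" for g k
  proof -
    have fms: "finite_measure_subalgebra M (Fk k)"
      by (intro finite_measure_subalgebra.intro finite_measure_subalgebra_axioms.intro sub) unfold_locales
    interpret SF: sigma_finite_subalgebra M "Fk k" by (rule finite_measure_subalgebra_is_sigma_finite[OF fms])
    have gM[measurable]: "g \<in> borel_measurable M" by (rule measM[OF gm])
    define fi where "fi i \<omega> = g \<omega> * ga k * (u k \<omega> \<bullet> i)" for i \<omega>
    have fiF: "fi i \<in> borel_measurable (Fk k)" for i
    proof -
      have [measurable]: "g \<in> borel_measurable (Fk k)" "u k \<in> borel_measurable (Fk k)" using gm um by auto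
      show ?thesis unfolding fi_def by measurable
    qed
    have fiM[measurable]: "fi i \<in> borel_measurable M" for i by (rule measM[OF fiF])
    have ipi: "integrable M (\<lambda>\<omega>. fi i \<omega> * (w k \<omega> \<bullet> i))" if i: "i \<in> Basis" for i
    proof -
      have fi2: "integrable M (\<lambda>\<omega>. (fi i \<omega>)\<^sup>2)"
      proof (rule Bochner_Integration.integrable_bound[of _ "\<lambda>\<omega>. (ga k)\<^sup>2 * Cu\<^sup>2 * (g \<omega>)\<^sup>2"])
        show "integrable M (\<lambda>\<omega>. (ga k)\<^sup>2 * Cu\<^sup>2 * (g \<omega>)\<^sup>2)" using g2 by simp
        show "(\<lambda>\<omega>. (fi i \<omega>)\<^sup>2) \<in> borel_measurable M" by measurable
        show "AE \<omega> in M. norm ((fi i \<omega>)\<^sup>2) \<le> norm ((ga k)\<^sup>2 * Cu\<^sup>2 * (g \<omega>)\<^sup>2)"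
        proof (rule AE_I2)
          fix \<omega> assume \<omega>: "\<omega> \<in> space M"
          have "\<bar>u k \<omega> \<bullet> i\<bar> \<le> Cu"
            using Basis_le_norm[OF i, of "u k \<omega>"] ub[OF \<omega>, of k] by (simp add: inner_commute)
          hence "(u k \<omega> \<bullet> i)\<^sup>2 \<le> Cu\<^sup>2" by (metis abs_ge_zero power2_abs power_mono)
          hence "((g \<omega>)\<^sup>2 * (ga k)\<^sup>2) * (u k \<omega> \<bullet> i)\<^sup>2 \<le> ((g \<omega>)\<^sup>2 * (ga k)\<^sup>2) * Cu\<^sup>2"
            by (rule mult_left_mono) simp
          hence "(fi i \<omega>)\<^sup>2 \<le> (ga k)\<^sup>2 * Cu\<^sup>2 * (g \<omega>)\<^sup>2"
            unfolding fi_def by (simp add: power_mult_distrib algebra_simps)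
          thus "norm ((fi i \<omega>)\<^sup>2) \<le> norm ((ga k)\<^sup>2 * Cu\<^sup>2 * (g \<omega>)\<^sup>2)" by simp
        qed
      qed
      have wi2: "integrable M (\<lambda>\<omega>. (w k \<omega> \<bullet> i)\<^sup>2)"
      proof (rule Bochner_Integration.integrable_bound[of _ "\<lambda>\<omega>. (norm (w k \<omega>))\<^sup>2"])
        show "integrable M (\<lambda>\<omega>. (norm (w k \<omega>))\<^sup>2)" using w2_int by simp
        show "(\<lambda>\<omega>. (w k \<omega> \<bullet> i)\<^sup>2) \<in> borel_measurable M" by measurable
        show "AE \<omega> in M. norm ((w k \<omega> \<bullet> i)\<^sup>2) \<le> norm ((norm (w k \<omega>))\<^sup>2)"
        proof (rule AE_I2)
          fix \<omega>
          have "\<bar>w k \<omega> \<bullet> i\<bar> \<le> norm (w k \<omega>)" using Basis_le_norm[OF i, of "w k \<omega>"] by (simp add: inner_commute)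
          hence "(w k \<omega> \<bullet> i)\<^sup>2 \<le> (norm (w k \<omega>))\<^sup>2" by (metis abs_ge_zero power2_abs power_mono)
          thus "norm ((w k \<omega> \<bullet> i)\<^sup>2) \<le> norm ((norm (w k \<omega>))\<^sup>2)" by simp
        qed
      qed
      show ?thesis by (rule int_prod) (use fi2 wi2 in auto)
    qed
    have each: "(\<integral>\<omega>. fi i \<omega> * (w k \<omega> \<bullet> i) \<partial>M) = 0" if i: "i \<in> Basis" for i
    proof -
      note ip = ipi[OF i]
      have "(\<integral>\<omega>. fi i \<omega> * (w k \<omega> \<bullet> i) \<partial>M) = (\<integral>\<omega>. fi i \<omega> * real_cond_exp M (Fk k) (\<lambda>\<omega>. w k \<omega> \<bullet> i) \<omega> \<partial>M)"
        by (rule SF.real_cond_exp_intg(2)[symmetric, OF ip fiF]) measurable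
      also have "\<dots> = (\<integral>\<omega>. 0 \<partial>M)"
      proof (rule integral_cong_AE)
        show "(\<lambda>\<omega>. fi i \<omega> * real_cond_exp M (Fk k) (\<lambda>\<omega>. w k \<omega> \<bullet> i) \<omega>) \<in> borel_measurable M"
          using fiM by measurable
        show "AE \<omega> in M. fi i \<omega> * real_cond_exp M (Fk k) (\<lambda>\<omega>. w k \<omega> \<bullet> i) \<omega> = 0"
          using w_unbiased[rule_format, OF i, of k] unfolding Fk_def by eventually_elim simp
      qed simp
      finally show ?thesis by simp
    qed
    have "(\<integral>\<omega>. g \<omega> * d k \<omega> \<partial>M) = (\<integral>\<omega>. (\<Sum>i\<in>Basis. fi i \<omega> * (w k \<omega> \<bullet> i)) \<partial>M)"
    proof (rule Bochner_Integration.integral_cong[OF refl])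
      fix \<omega>
      have "w k \<omega> \<bullet> u k \<omega> = (\<Sum>i\<in>Basis. (w k \<omega> \<bullet> i) * (u k \<omega> \<bullet> i))" by (rule euclidean_inner)
      thus "g \<omega> * d k \<omega> = (\<Sum>i\<in>Basis. fi i \<omega> * (w k \<omega> \<bullet> i))"
        unfolding d_def fi_def by (simp add: sum_distrib_left algebra_simps)
    qed
    also have "\<dots> = (\<Sum>i\<in>Basis. \<integral>\<omega>. fi i \<omega> * (w k \<omega> \<bullet> i) \<partial>M)"
      by (rule Bochner_Integration.integral_sum) (rule ipi)
    also have "\<dots> = 0" using each by simp
    finally show ?thesis .
  qed
  have dF: "d k \<in> borel_measurable (Fk (Suc k))" for k
  proof -
    have [measurable]: "w k \<in> borel_measurable (Fk (Suc k))" "u k \<in> borel_measurable (Fk (Suc k))"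
      using wm mono_meas[OF _ um, of k "Suc k"] by auto
    show ?thesis unfolding d_def by measurable
  qed
  interpret MG: mg M Fk d
    by unfold_locales (use sub monoF dF d2 orth in auto)
  have Ed2: "(\<integral>\<omega>. (d k \<omega>)\<^sup>2 \<partial>M) \<le> (ga k)\<^sup>2 * Cu\<^sup>2 * nu\<^sup>2" for k
  proof -
    have "(\<integral>\<omega>. (d k \<omega>)\<^sup>2 \<partial>M) \<le> (\<integral>\<omega>. (ga k)\<^sup>2 * Cu\<^sup>2 * (norm (w k \<omega>))\<^sup>2 \<partial>M)"
      by (rule integral_mono) (use d2 w2_int dsq in auto)
    also have "\<dots> = (ga k)\<^sup>2 * Cu\<^sup>2 * (\<integral>\<omega>. (norm (w k \<omega>))\<^sup>2 \<partial>M)" by simp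
    also have "\<dots> \<le> (ga k)\<^sup>2 * Cu\<^sup>2 * nu\<^sup>2" using Ew2[of k] by (intro mult_left_mono) auto
    finally show ?thesis .
  qed
  have sumd: "summable (\<lambda>k. \<integral>\<omega>. (d k \<omega>)\<^sup>2 \<partial>M)"
  proof (rule summable_comparison_test'[of "\<lambda>k. (ga k)\<^sup>2 * (Cu\<^sup>2 * nu\<^sup>2)"])
    show "summable (\<lambda>k. (ga k)\<^sup>2 * (Cu\<^sup>2 * nu\<^sup>2))" by (rule summable_mult2[OF ga2])
    fix k :: nat
    have "0 \<le> (\<integral>\<omega>. (d k \<omega>)\<^sup>2 \<partial>M)" by (rule integral_nonneg_AE) simp
    thus "norm (\<integral>\<omega>. (d k \<omega>)\<^sup>2 \<partial>M) \<le> (ga k)\<^sup>2 * (Cu\<^sup>2 * nu\<^sup>2)" using Ed2[of k] by (simp add: mult.assoc)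
  qed
  have conv: "AE \<omega> in M. convergent (\<lambda>n. \<Sum>k<n. d k \<omega>)" by (rule MG.mg_conv[OF sumd])
  have bsum: "AE \<omega> in M. summable (\<lambda>k. (ga k)\<^sup>2 * (norm (w k \<omega>))\<^sup>2)"
  proof (rule ae_summable)
    show "(\<lambda>\<omega>. (ga k)\<^sup>2 * (norm (w k \<omega>))\<^sup>2) \<in> borel_measurable M" for k by measurable
    show "0 \<le> (ga k)\<^sup>2 * (norm (w k \<omega>))\<^sup>2" for k \<omega> by simp
    show "integrable M (\<lambda>\<omega>. (ga k)\<^sup>2 * (norm (w k \<omega>))\<^sup>2)" for k using w2_int by simp
    show "summable (\<lambda>k. \<integral>\<omega>. (ga k)\<^sup>2 * (norm (w k \<omega>))\<^sup>2 \<partial>M)"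
    proof (rule summable_comparison_test'[of "\<lambda>k. (ga k)\<^sup>2 * nu\<^sup>2"])
      show "summable (\<lambda>k. (ga k)\<^sup>2 * nu\<^sup>2)" by (rule summable_mult2[OF ga2])
      fix k :: nat
      have "0 \<le> (\<integral>\<omega>. (norm (w k \<omega>))\<^sup>2 \<partial>M)" by (rule integral_nonneg_AE) simp
      moreover have "(ga k)\<^sup>2 * (\<integral>\<omega>. (norm (w k \<omega>))\<^sup>2 \<partial>M) \<le> (ga k)\<^sup>2 * nu\<^sup>2"
        using Ew2[of k] by (intro mult_left_mono) auto
      ultimately show "norm (\<integral>\<omega>. (ga k)\<^sup>2 * (norm (w k \<omega>))\<^sup>2 \<partial>M) \<le> (ga k)\<^sup>2 * nu\<^sup>2" by simp
    qed
  qed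
  have pathwise: "(\<lambda>k. x k \<omega>) \<longlonglongrightarrow> xs"
    if \<omega>: "\<omega> \<in> space M" and cv: "convergent (\<lambda>n. \<Sum>k<n. d k \<omega>)"
      and bs: "summable (\<lambda>k. (ga k)\<^sup>2 * (norm (w k \<omega>))\<^sup>2)" for \<omega>
  proof -
    define V where "V k = (norm (x k \<omega> - xs))\<^sup>2" for k
    define b where "b k = (ga k)\<^sup>2 * (L\<^sup>2 * Dm\<^sup>2) + (ga k)\<^sup>2 * (norm (w k \<omega>))\<^sup>2" for k
    define S where "S n = 2 * (\<Sum>k<n. d k \<omega>)" for n
    have rec: "V (Suc k) \<le> V k - (2 * eta) * ga k * V k + b k - (S (Suc k) - S k)" for k
    proof -
      have xk: "x k \<omega> \<in> X" by (rule xX[OF \<omega>])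
      have ps: "(norm (closest_point X (x k \<omega> - ga k *\<^sub>R (gradf (x k \<omega>) + w k \<omega>)) - xs))\<^sup>2 \<le>
          (norm (x k \<omega> - xs))\<^sup>2 - 2 * eta * ga k * (norm (x k \<omega> - xs))\<^sup>2 + (ga k)\<^sup>2 * L\<^sup>2 * (norm (x k \<omega> - xs))\<^sup>2
          + (ga k)\<^sup>2 * (norm (w k \<omega>))\<^sup>2 - 2 * ga k * (w k \<omega> \<bullet> (x k \<omega> - xs - ga k *\<^sub>R (gradf (x k \<omega>) - gradf xs)))"
        by (rule proj_step[OF Xconvex Xclosed Xne xs(1) fp smono[OF xk]])
           (use Lip xk xs(1) L0 ga_pos[of k] in auto)
      have "(norm (x k \<omega> - xs))\<^sup>2 \<le> Dm\<^sup>2" using distX[OF xk xs(1)] by (simp add: power_mono)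
      hence "(ga k)\<^sup>2 * L\<^sup>2 * (norm (x k \<omega> - xs))\<^sup>2 \<le> (ga k)\<^sup>2 * (L\<^sup>2 * Dm\<^sup>2)"
        by (simp add: mult_left_mono mult.assoc)
      moreover have "x (Suc k) \<omega> = closest_point X (x k \<omega> - ga k *\<^sub>R (gradf (x k \<omega>) + w k \<omega>))"
        using x_Suc unfolding ga_def by simp
      moreover have "S (Suc k) - S k = 2 * (ga k * (w k \<omega> \<bullet> u k \<omega>))" by (simp add: S_def d_def)
      ultimately show ?thesis using ps unfolding V_def b_def u_def by (simp add: algebra_simps)
    qed
    have bsm: "summable b" unfolding b_def by (intro summable_add summable_mult2 ga2 bs)
    have Sc: "convergent S" unfolding S_def[abs_def] using convergent_mult_const_iff[of "2::real" "\<lambda>n. \<Sum>k<n. d k \<omega>"] cv by simp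
    have "V \<longlonglongrightarrow> 0"
      by (rule det_conv[OF _ _ _ gans bsm _ Sc rec]) (use eta ga_pos in \<open>auto simp: V_def b_def less_imp_le\<close>)
    hence "(\<lambda>k. sqrt (V k)) \<longlonglongrightarrow> sqrt 0" by (intro tendsto_intros)
    hence "(\<lambda>k. norm (x k \<omega> - xs)) \<longlonglongrightarrow> 0" by (simp add: V_def)
    thus ?thesis by (simp add: tendsto_norm_zero_iff LIM_zero_iff)
  qed
  have "AE \<omega> in M. (\<lambda>k. x k \<omega>) \<longlonglongrightarrow> xs"
    using AE_space conv bsum by eventually_elim (use pathwise in blast)
  thus ?thesis using xs uniq by blast
qed



end
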